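(* Let $K$ be an algebraically closed field of characteristic $2$, let $B\in K[x_1,x_2,x_3]$ be homogeneous of degree $4$ and let $\mathcal{C}_B=\{x\in\mathbb{P}^2\mid \nabla B(x)=0\}$. Consider $$X=\{w^4+w^2x_1^2+B(x_1,x_2,x_3)=0\}\subset\mathbb{P}^3_K$$ with coordinates $(w,x_1,x_2,x_3)$. If $\mathcal{C}_B$ is finite and $\mathcal{C}_B\cap\{x_1=0\}=\emptyset$, then $X$ has finitely many singular points and $|\mathrm{Sing}(X)|=2|\mathcal{C}_B|$. For a general quartic $B$, $X$ has exactly $14$ singular points, and they are nodes.
   Context: A node ($A_1$-singularity) is a double point whose projectivized tangent cone is a smooth conic. *)

theory Defs
  imports "HOL-Computational_Algebra.Computational_Algebra"
begin

text \<open>Polynomials are represented explicitly by coefficient functions on monomials.\<close>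

definition mons :: "'v set \<Rightarrow> nat \<Rightarrow> ('v \<Rightarrow> nat) set" where
  "mons V d = {m. (\<forall>v. v \<notin> V \<longrightarrow> m v = 0) \<and> sum m V = d}"

definition mons_le :: "'v set \<Rightarrow> nat \<Rightarrow> ('v \<Rightarrow> nat) set" where
  "mons_le V D = {m. (\<forall>v. v \<notin> V \<longrightarrow> m v = 0) \<and> sum m V \<le> D}"

definition peval :: "'v set \<Rightarrow> nat \<Rightarrow> (('v \<Rightarrow> nat) \<Rightarrow> 'a::comm_ring_1) \<Rightarrow> ('v \<Rightarrow> 'a) \<Rightarrow> 'a" where
  "peval V D c x = (\<Sum>m\<in>mons_le V D. c m * (\<Prod>v\<in>V. x v ^ m v))"

definition heval :: "'v set \<Rightarrow> nat \<Rightarrow> (('v \<Rightarrow> nat) \<Rightarrow> 'a::comm_ring_1) \<Rightarrow> ('v \<Rightarrow> 'a) \<Rightarrow> 'a" where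
  "heval V d c x = (\<Sum>m\<in>mons V d. c m * (\<Prod>v\<in>V. x v ^ m v))"

text \<open>Hasse derivative D^alpha of the form at x (= coefficient of y^alpha in F(x+y)).\<close>
definition hasse :: "'v set \<Rightarrow> nat \<Rightarrow> (('v \<Rightarrow> nat) \<Rightarrow> 'a::comm_ring_1) \<Rightarrow> ('v \<Rightarrow> nat) \<Rightarrow> ('v \<Rightarrow> 'a) \<Rightarrow> 'a" where
  "hasse V d c \<alpha> x = (\<Sum>m\<in>mons V d. c m *
      (\<Prod>v\<in>V. of_nat (m v choose \<alpha> v) * x v ^ (m v - \<alpha> v)))"

definition hpd :: "'v set \<Rightarrow> nat \<Rightarrow> (('v \<Rightarrow> nat) \<Rightarrow> 'a::comm_ring_1) \<Rightarrow> 'v \<Rightarrow> ('v \<Rightarrow> 'a) \<Rightarrow> 'a" where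
  "hpd V d c u x = hasse V d c (\<lambda>v. if v = u then 1 else 0) x"

definition nzvec :: "'v set \<Rightarrow> ('v \<Rightarrow> 'a::zero) set" where
  "nzvec V = {x. (\<forall>v. v \<notin> V \<longrightarrow> x v = 0) \<and> (\<exists>v\<in>V. x v \<noteq> 0)}"

definition proj_class :: "'v set \<Rightarrow> ('v \<Rightarrow> 'a::field) \<Rightarrow> ('v \<Rightarrow> 'a) set" where
  "proj_class V x = {y. (\<forall>v. v \<notin> V \<longrightarrow> y v = 0) \<and> (\<exists>c. c \<noteq> 0 \<and> (\<forall>v\<in>V. y v = c * x v))}"

definition proj_space :: "'v set \<Rightarrow> ('v \<Rightarrow> 'a::field) set set" where
  "proj_space V = proj_class V ` nzvec V"

definition is_sing_vec :: "'v set \<Rightarrow> nat \<Rightarrow> (('v \<Rightarrow> nat) \<Rightarrow> 'a::field) \<Rightarrow> ('v \<Rightarrow> 'a) \<Rightarrow> bool" where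
  "is_sing_vec V d c x \<longleftrightarrow> x \<in> nzvec V \<and> heval V d c x = 0 \<and> (\<forall>u\<in>V. hpd V d c u x = 0)"

definition Sing :: "'v set \<Rightarrow> nat \<Rightarrow> (('v \<Rightarrow> nat) \<Rightarrow> 'a::field) \<Rightarrow> ('v \<Rightarrow> 'a) set set" where
  "Sing V d c = proj_class V ` {x. is_sing_vec V d c x}"

definition smooth_hyp :: "'v set \<Rightarrow> nat \<Rightarrow> (('v \<Rightarrow> nat) \<Rightarrow> 'a::field) \<Rightarrow> bool" where
  "smooth_hyp V d c \<longleftrightarrow> \<not> (\<exists>x. is_sing_vec V d c x)"

text \<open>Node: a double point whose projectivized tangent cone is a smooth conic.
  In the affine chart x_{v0} = 1 (representative y with y v0 = 1), the Taylor expansion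
  of the local equation at the point has vanishing terms of order 0 and 1, and its
  quadratic part (coefficients = Hasse derivatives of order 2 in the chart variables)
  defines a smooth conic in P(K^(V - {v0})).\<close>
definition is_node :: "'v set \<Rightarrow> nat \<Rightarrow> (('v \<Rightarrow> nat) \<Rightarrow> 'a::field) \<Rightarrow> ('v \<Rightarrow> 'a) set \<Rightarrow> bool" where
  "is_node V d c P \<longleftrightarrow> P \<in> Sing V d c \<and>
     (\<forall>v0\<in>V. \<forall>y\<in>P. y v0 = 1 \<longrightarrow>
        smooth_hyp (V - {v0}) 2 (\<lambda>\<alpha>. hasse V d c \<alpha> y))"

text \<open>The quartic X = {w^4 + w^2 x1^2 + B(x1,x2,x3) = 0} in P^3, coordinates
  (w,x1,x2,x3) indexed by 0,1,2,3; B has coefficients b on mons {..<3} 4 with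
  x1,x2,x3 indexed by 0,1,2.\<close>
definition Xcoef :: "((nat \<Rightarrow> nat) \<Rightarrow> 'a::comm_ring_1) \<Rightarrow> (nat \<Rightarrow> nat) \<Rightarrow> 'a" where
  "Xcoef b m =
     (if m = (\<lambda>i. if i = 0 then 4 else 0) then 1 else 0)
   + (if m = (\<lambda>i. if i = 0 then 2 else if i = 1 then 2 else 0) then 1 else 0)
   + (if m 0 = 0 then b (\<lambda>i. m (Suc i)) else 0)"

definition CB :: "((nat \<Rightarrow> nat) \<Rightarrow> 'a::field) \<Rightarrow> (nat \<Rightarrow> 'a) set set" where
  "CB b = proj_class {..<3} ` {x \<in> nzvec {..<3}. \<forall>u<3. hpd {..<3} 4 b u x = 0}"

end

theory Submission
  imports Defs
begin

lemma finite_mons: "finite V \<Longrightarrow> finite (mons V d)"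
proof -
  assume V: "finite V"
  have "mons V d \<subseteq> {m. \<forall>x. (x \<in> V \<longrightarrow> m x \<in> {..d}) \<and> (x \<notin> V \<longrightarrow> m x = 0)}"
  proof
    fix m assume m: "m \<in> mons V d"
    { fix x assume "x \<in> V"
      then have "m x \<le> sum m V" using V by (intro member_le_sum) auto
      then have "m x \<le> d" using m by (simp add: mons_def) }
    then show "m \<in> {m. \<forall>x. (x \<in> V \<longrightarrow> m x \<in> {..d}) \<and> (x \<notin> V \<longrightarrow> m x = 0)}"
      using m by (auto simp: mons_def)
  qed
  moreover have "finite {m. \<forall>x. (x \<in> V \<longrightarrow> m x \<in> {..d}) \<and> (x \<notin> V \<longrightarrow> m x = 0)}"
    using V by (intro finite_set_of_finite_funs) auto
  ultimately show ?thesis by (rule finite_subset)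
qed

lemma sum_mons_insert:
  assumes a: "a \<notin> V" and V: "finite V"
  shows "(\<Sum>m\<in>mons (insert a V) d. f m) = (\<Sum>k\<le>d. \<Sum>m\<in>mons V (d-k). f (m(a:=k)))"
proof -
  have "(\<Sum>k\<le>d. \<Sum>m\<in>mons V (d-k). f (m(a:=k))) = (\<Sum>(k,m)\<in>Sigma {..d} (\<lambda>k. mons V (d-k)). f (m(a:=k)))"
    by (rule sum.Sigma) (auto simp: finite_mons V)
  also have "\<dots> = (\<Sum>m\<in>mons (insert a V) d. f m)"
  proof (rule sum.reindex_bij_witness[where i = "\<lambda>m. (m a, m(a:=0))" and j = "\<lambda>(k,m). m(a:=k)"])
    fix m assume m: "m \<in> mons (insert a V) d"
    have s: "sum m (insert a V) = m a + sum m V" using a V by simp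
    have s2: "sum (m(a:=0)) V = sum m V" using a by (intro sum.cong) auto
    show "(case (m a, m(a := 0)) of (k, m) \<Rightarrow> m(a := k)) = m" by simp
    show "(m a, m(a := 0)) \<in> Sigma {..d} (\<lambda>k. mons V (d - k))"
      using m s s2 by (auto simp: mons_def)
  next
    fix p assume p: "p \<in> Sigma {..d} (\<lambda>k. mons V (d - k))"
    then obtain k m where pk: "p = (k,m)" "k \<le> d" "m \<in> mons V (d-k)" by auto
    have ma: "m a = 0" using pk a by (auto simp: mons_def)
    have s2: "sum (m(a:=k)) V = sum m V" using a by (intro sum.cong) auto
    show "((case p of (k, m) \<Rightarrow> m(a := k)) a, (case p of (k, m) \<Rightarrow> m(a := k))(a := 0)) = p" using pk ma by auto
    show "(case p of (k, m) \<Rightarrow> m(a := k)) \<in> mons (insert a V) d"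
      using pk s2 a V by (auto simp: mons_def)
  qed auto
  finally show ?thesis ..
qed

lemma mons_empty: "mons {} d = (if d = 0 then {\<lambda>_. 0} else {})"
  by (auto simp: mons_def)

lemma sum_mons_empty: "(\<Sum>m\<in>mons {} d. f m) = (if d = 0 then f (\<lambda>_. 0) else 0)"
  by (simp add: mons_empty)

lemma lt3: "{..<3::nat} = {0,1,2}" by auto
lemma lt4: "{..<4::nat} = {0,1,2,3}" by auto

lemma atMost_expand: "{..0::nat} = {0}" "{..Suc n} = insert (Suc n) {..n}" by auto

section \<open>Characteristic 2\<close>

lemma c2_two: "CHAR('a::comm_ring_1) = 2 \<Longrightarrow> (1::'a) + 1 = 0"
proof -
  assume c: "CHAR('a) = 2"
  have "(of_nat CHAR('a)::'a) = 0" by (rule of_nat_CHAR)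
  then have "(of_nat 2::'a) = 0" by (simp only: c)
  moreover have "(of_nat 2::'a) = 1 + 1" by (simp only: of_nat_Suc of_nat_0 numeral_2_eq_2) simp
  ultimately show ?thesis by simp
qed

lemma c2_add_self: "CHAR('a::comm_ring_1) = 2 \<Longrightarrow> (x::'a) + x = 0"
proof -
  assume c: "CHAR('a) = 2"
  have "x + x = (1 + 1) * x" by (simp only: distrib_right mult_1_left)
  then show ?thesis using c2_two[OF c] by (simp only: mult_zero_left)
qed

lemma c2_bit0: "CHAR('a::comm_ring_1) = 2 \<Longrightarrow> (numeral (Num.Bit0 n)::'a) = 0"
  by (simp only: numeral_Bit0 c2_add_self)

lemma c2_bit1: "CHAR('a::comm_ring_1) = 2 \<Longrightarrow> (numeral (Num.Bit1 n)::'a) = 1"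
  by (simp only: numeral_Bit1 c2_add_self add_0_left)

section \<open>Hasse derivatives of the quartic X\<close>

definition e4 :: "nat \<Rightarrow> nat" where "e4 = (\<lambda>i. if i = 0 then 4 else 0)"
definition e22 :: "nat \<Rightarrow> nat" where "e22 = (\<lambda>i. if i = 0 then 2 else if i = 1 then 2 else 0)"
definition extm :: "(nat \<Rightarrow> nat) \<Rightarrow> nat \<Rightarrow> nat" where
  "extm m = (\<lambda>i. case i of 0 \<Rightarrow> 0 | Suc j \<Rightarrow> m j)"

definition hmon :: "(nat \<Rightarrow> nat) \<Rightarrow> (nat \<Rightarrow> nat) \<Rightarrow> (nat \<Rightarrow> 'a::comm_ring_1) \<Rightarrow> 'a" where
  "hmon m \<alpha> x = (\<Prod>v\<in>{..<4}. of_nat (m v choose \<alpha> v) * x v ^ (m v - \<alpha> v))"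

lemma e4_mons: "e4 \<in> mons {..<4} 4"
  by (simp add: mons_def e4_def lt4)
lemma e22_mons: "e22 \<in> mons {..<4} 4"
  by (simp add: mons_def e22_def lt4)

lemma sum_shift_mons:
  fixes g :: "(nat \<Rightarrow> nat) \<Rightarrow> 'a::comm_monoid_add"
  shows "(\<Sum>m\<in>{m\<in>mons {..<4::nat} 4. m 0 = 0}. g (\<lambda>i. m (Suc i))) = (\<Sum>m\<in>mons {..<3::nat} (4::nat). g m)"
proof (rule sum.reindex_bij_witness[where i = extm and j = "\<lambda>(m::nat\<Rightarrow>nat) i. m (Suc i)"])
  fix m :: "nat \<Rightarrow> nat" assume m: "m \<in> {m\<in>mons {..<4} 4. m 0 = 0}"
  show "extm (\<lambda>i. m (Suc i)) = m"
    using m by (auto simp: extm_def fun_eq_iff split: nat.split)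
  have "sum m {..<4} = m 0 + (\<Sum>i<3. m (Suc i))"
    by (simp add: numeral_eq_Suc sum.lessThan_Suc_shift del: sum.lessThan_Suc)
  then show "(\<lambda>i. m (Suc i)) \<in> mons {..<3} 4"
    using m by (auto simp: mons_def)
next
  fix m :: "nat \<Rightarrow> nat" assume m: "m \<in> mons {..<3} (4::nat)"
  show "(\<lambda>i. extm m (Suc i)) = m" by (simp add: extm_def)
  have "sum (extm m) {..<4} = extm m 0 + (\<Sum>i<3. extm m (Suc i))"
    by (simp add: numeral_eq_Suc sum.lessThan_Suc_shift del: sum.lessThan_Suc)
  then show "extm m \<in> {m \<in> mons {..<4} 4. m 0 = 0}"
    using m by (auto simp: mons_def extm_def split: nat.split)
qed auto

lemma hasse_X:
  "hasse {..<4} 4 (Xcoef b) \<alpha> x = hmon e4 \<alpha> x + hmon e22 \<alpha> x +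
     (if \<alpha> 0 = 0 then hasse {..<3} 4 b (\<lambda>i. \<alpha> (Suc i)) (\<lambda>i. x (Suc i)) else 0)"
proof -
  have split: "Xcoef b m = (if m = e4 then 1 else 0) + (if m = e22 then 1 else 0) +
      (if m 0 = 0 then b (\<lambda>i. m (Suc i)) else 0)" for m
    unfolding Xcoef_def e4_def e22_def by (rule refl)
  have P: "hmon m \<alpha> x = (if m 0 = 0 then (if \<alpha> 0 = 0 then 1 else 0) else of_nat (m 0 choose \<alpha> 0) * x 0 ^ (m 0 - \<alpha> 0)) *
      (\<Prod>v<3. of_nat (m (Suc v) choose \<alpha> (Suc v)) * x (Suc v) ^ (m (Suc v) - \<alpha> (Suc v)))" for m
    by (simp add: hmon_def numeral_eq_Suc prod.lessThan_Suc_shift binomial_eq_0 del: prod.lessThan_Suc)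
  have "hasse {..<4} 4 (Xcoef b) \<alpha> x = (\<Sum>m\<in>mons {..<4} 4. Xcoef b m * hmon m \<alpha> x)"
    by (simp add: hasse_def hmon_def)
  also have "\<dots> = (\<Sum>m\<in>mons {..<4} 4. (if m = e4 then hmon m \<alpha> x else 0)) +
      (\<Sum>m\<in>mons {..<4} 4. (if m = e22 then hmon m \<alpha> x else 0)) +
      (\<Sum>m\<in>mons {..<4} 4. (if m 0 = 0 then b (\<lambda>i. m (Suc i)) * hmon m \<alpha> x else 0))"
    unfolding split distrib_right sum.distrib by (intro arg_cong2[where f="(+)"] sum.cong refl) auto
  also have "(\<Sum>m\<in>mons {..<4} 4. (if m = e4 then hmon m \<alpha> x else 0)) = hmon e4 \<alpha> x"
    using e4_mons by (simp add: finite_mons)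
  also have "(\<Sum>m\<in>mons {..<4} 4. (if m = e22 then hmon m \<alpha> x else 0)) = hmon e22 \<alpha> x"
    using e22_mons by (simp add: finite_mons)
  also have "(\<Sum>m\<in>mons {..<4} 4. (if m 0 = 0 then b (\<lambda>i. m (Suc i)) * hmon m \<alpha> x else 0))
      = (\<Sum>m\<in>{m\<in>mons {..<4} 4. m 0 = 0}. b (\<lambda>i. m (Suc i)) * hmon m \<alpha> x)"
    by (simp add: sum.inter_filter finite_mons)
  also have "\<dots> = (\<Sum>m\<in>{m\<in>mons {..<4} 4. m 0 = 0}. (if \<alpha> 0 = 0 then 1 else 0) * (b (\<lambda>i. m (Suc i)) *
      (\<Prod>v<3. of_nat (m (Suc v) choose \<alpha> (Suc v)) * x (Suc v) ^ (m (Suc v) - \<alpha> (Suc v)))))"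
    by (intro sum.cong refl) (simp add: P)
  also have "\<dots> = (if \<alpha> 0 = 0 then 1 else 0) * (\<Sum>m\<in>mons {..<3} 4. b m *
      (\<Prod>v<3. of_nat (m v choose \<alpha> (Suc v)) * x (Suc v) ^ (m v - \<alpha> (Suc v))))"
    unfolding sum_distrib_left[symmetric]
    using sum_shift_mons[where g = "\<lambda>m. b m * (\<Prod>v<3. of_nat (m v choose \<alpha> (Suc v)) * x (Suc v) ^ (m v - \<alpha> (Suc v)))"]
    by simp
  finally show ?thesis by (simp add: hasse_def)
qed

definition cf :: "((nat \<Rightarrow> nat) \<Rightarrow> 'a) \<Rightarrow> nat \<Rightarrow> nat \<Rightarrow> nat \<Rightarrow> 'a" where
  "cf b i j k = b ((\<lambda>_. 0)(2:=k, 1:=j, 0:=i))"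

definition vv0 :: "((nat \<Rightarrow> nat) \<Rightarrow> 'a::comm_ring_1) \<Rightarrow> (nat \<Rightarrow> 'a) \<Rightarrow> 'a" where
  "vv0 b x = cf b 2 1 1 * x 0 ^ 2 + cf b 0 3 1 * x 1 ^ 2 + cf b 0 1 3 * x 2 ^ 2"
definition vv1 :: "((nat \<Rightarrow> nat) \<Rightarrow> 'a::comm_ring_1) \<Rightarrow> (nat \<Rightarrow> 'a) \<Rightarrow> 'a" where
  "vv1 b x = cf b 3 0 1 * x 0 ^ 2 + cf b 1 2 1 * x 1 ^ 2 + cf b 1 0 3 * x 2 ^ 2"
definition vv2 :: "((nat \<Rightarrow> nat) \<Rightarrow> 'a::comm_ring_1) \<Rightarrow> (nat \<Rightarrow> 'a) \<Rightarrow> 'a" where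
  "vv2 b x = cf b 3 1 0 * x 0 ^ 2 + cf b 1 3 0 * x 1 ^ 2 + cf b 1 1 2 * x 2 ^ 2"

lemmas expand_simps = lt3 sum_mons_insert sum_mons_empty numeral_eq_Suc atMost_expand

lemma grad0:
  fixes b :: "(nat \<Rightarrow> nat) \<Rightarrow> 'a::comm_ring_1"
  assumes c: "CHAR('a) = 2" and a: "\<alpha> 0 = 1" "\<alpha> 1 = 0" "\<alpha> 2 = 0"
  shows "hasse {..<3} 4 b \<alpha> x = x 1 * vv2 b x + x 2 * vv1 b x"
  using a unfolding hasse_def vv0_def vv1_def vv2_def cf_def lt3
  apply (simp add: expand_simps c2_bit0[OF c] c2_bit1[OF c])
  apply (simp add: algebra_simps)
  done

lemma grad1:
  fixes b :: "(nat \<Rightarrow> nat) \<Rightarrow> 'a::comm_ring_1"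
  assumes c: "CHAR('a) = 2" and a: "\<alpha> 0 = 0" "\<alpha> 1 = 1" "\<alpha> 2 = 0"
  shows "hasse {..<3} 4 b \<alpha> x = x 0 * vv2 b x + x 2 * vv0 b x"
  using a unfolding hasse_def vv0_def vv1_def vv2_def cf_def lt3
  apply (simp add: expand_simps c2_bit0[OF c] c2_bit1[OF c])
  apply (simp add: algebra_simps)
  done

lemma grad2:
  fixes b :: "(nat \<Rightarrow> nat) \<Rightarrow> 'a::comm_ring_1"
  assumes c: "CHAR('a) = 2" and a: "\<alpha> 0 = 0" "\<alpha> 1 = 0" "\<alpha> 2 = 1"
  shows "hasse {..<3} 4 b \<alpha> x = x 1 * vv0 b x + x 0 * vv1 b x"
  using a unfolding hasse_def vv0_def vv1_def vv2_def cf_def lt3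
  apply (simp add: expand_simps c2_bit0[OF c] c2_bit1[OF c])
  apply (simp add: algebra_simps)
  done

lemma hess01:
  fixes b :: "(nat \<Rightarrow> nat) \<Rightarrow> 'a::comm_ring_1"
  assumes c: "CHAR('a) = 2" and a: "\<alpha> 0 = 1" "\<alpha> 1 = 1" "\<alpha> 2 = 0"
  shows "hasse {..<3} 4 b \<alpha> x = vv2 b x"
  using a unfolding hasse_def vv0_def vv1_def vv2_def cf_def lt3
  apply (simp add: expand_simps c2_bit0[OF c] c2_bit1[OF c])
  done

lemma hess02:
  fixes b :: "(nat \<Rightarrow> nat) \<Rightarrow> 'a::comm_ring_1"
  assumes c: "CHAR('a) = 2" and a: "\<alpha> 0 = 1" "\<alpha> 1 = 0" "\<alpha> 2 = 1"
  shows "hasse {..<3} 4 b \<alpha> x = vv1 b x"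
  using a unfolding hasse_def vv0_def vv1_def vv2_def cf_def lt3
  apply (simp add: expand_simps c2_bit0[OF c] c2_bit1[OF c])
  done

lemma hess12:
  fixes b :: "(nat \<Rightarrow> nat) \<Rightarrow> 'a::comm_ring_1"
  assumes c: "CHAR('a) = 2" and a: "\<alpha> 0 = 0" "\<alpha> 1 = 1" "\<alpha> 2 = 1"
  shows "hasse {..<3} 4 b \<alpha> x = vv0 b x"
  using a unfolding hasse_def vv0_def vv1_def vv2_def cf_def lt3
  apply (simp add: expand_simps c2_bit0[OF c] c2_bit1[OF c])
  done

lemma hasse_euler:
  fixes b :: "(nat \<Rightarrow> nat) \<Rightarrow> 'a::comm_ring_1"
  assumes c: "CHAR('a) = 2"
    and a0: "a0 0 = 2" "a0 1 = 0" "a0 2 = 0"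
    and a1: "a1 0 = 0" "a1 1 = 2" "a1 2 = 0"
    and a2: "a2 0 = 0" "a2 1 = 0" "a2 2 = 2"
  shows "hasse {..<3} 4 b a0 x * x 0 ^ 2 + hasse {..<3} 4 b a1 x * x 1 ^ 2 + hasse {..<3} 4 b a2 x * x 2 ^ 2
     + vv2 b x * x 0 * x 1 + vv1 b x * x 0 * x 2 + vv0 b x * x 1 * x 2 = 0"
  using a0 a1 a2 unfolding hasse_def vv0_def vv1_def vv2_def cf_def lt3
  apply (simp add: expand_simps c2_bit0[OF c] c2_bit1[OF c])
  apply (simp add: algebra_simps c2_bit0[OF c] c2_bit1[OF c])
  done

definition Gv :: "((nat \<Rightarrow> nat) \<Rightarrow> 'a::comm_ring_1) \<Rightarrow> (nat \<Rightarrow> 'a) \<Rightarrow> bool" where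
  "Gv b x \<longleftrightarrow> x 1 * vv2 b x + x 2 * vv1 b x = 0 \<and> x 0 * vv2 b x + x 2 * vv0 b x = 0 \<and>
     x 1 * vv0 b x + x 0 * vv1 b x = 0"

lemma heval_hasse0: "heval V d c x = hasse V d c (\<lambda>_. 0) x"
  by (simp add: heval_def hasse_def)

lemma all_lt3: "(\<forall>u<(3::nat). P u) \<longleftrightarrow> P 0 \<and> P 1 \<and> P 2"
proof
  assume "\<forall>u<3. P u" then show "P 0 \<and> P 1 \<and> P 2" by simp
next
  assume p: "P 0 \<and> P 1 \<and> P 2"
  show "\<forall>u<3. P u"
  proof (intro allI impI)
    fix u :: nat assume "u < 3" then have "u = 0 \<or> u = 1 \<or> u = 2" by auto
    then show "P u" using p by auto
  qed
qed

lemma grad_iff: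
  fixes b :: "(nat \<Rightarrow> nat) \<Rightarrow> 'a::comm_ring_1"
  assumes c: "CHAR('a) = 2"
  shows "(\<forall>u<3. hpd {..<3} 4 b u x = 0) \<longleftrightarrow> Gv b x"
proof -
  have "(\<forall>u<3. hpd {..<3} 4 b u x = 0) \<longleftrightarrow> hpd {..<3} 4 b 0 x = 0 \<and> hpd {..<3} 4 b 1 x = 0 \<and> hpd {..<3} 4 b 2 x = 0"
    by (rule all_lt3)
  also have "\<dots> \<longleftrightarrow> Gv b x"
    unfolding hpd_def Gv_def
    by (subst grad0[OF c], simp, simp, simp, subst grad1[OF c], simp, simp, simp, subst grad2[OF c], simp, simp, simp) simp
  finally show ?thesis .
qed

lemma sing_iff:
  fixes b :: "(nat \<Rightarrow> nat) \<Rightarrow> 'a::field"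
  assumes c: "CHAR('a) = 2"
  shows "is_sing_vec {..<4} 4 (Xcoef b) y \<longleftrightarrow> y \<in> nzvec {..<4} \<and>
     y 0 ^ 4 + y 0 ^ 2 * y 1 ^ 2 + heval {..<3} 4 b (\<lambda>i. y (Suc i)) = 0 \<and> Gv b (\<lambda>i. y (Suc i))"
proof -
  have h: "heval {..<4} 4 (Xcoef b) y = y 0 ^ 4 + y 0 ^ 2 * y 1 ^ 2 + heval {..<3} 4 b (\<lambda>i. y (Suc i))"
    unfolding heval_hasse0 hasse_X by (simp add: hmon_def e4_def e22_def lt4)
  have d0: "hpd {..<4} 4 (Xcoef b) 0 y = 0"
    unfolding hpd_def hasse_X by (simp add: hmon_def e4_def e22_def lt4 c2_bit0[OF c])
  have d1: "hpd {..<4} 4 (Xcoef b) 1 y = y 2 * vv2 b (\<lambda>i. y (Suc i)) + y 3 * vv1 b (\<lambda>i. y (Suc i))"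
    unfolding hpd_def hasse_X
    by (subst grad0[OF c]) (simp_all add: hmon_def e4_def e22_def lt4 c2_bit0[OF c] numeral_eq_Suc)
  have d2: "hpd {..<4} 4 (Xcoef b) 2 y = y 1 * vv2 b (\<lambda>i. y (Suc i)) + y 3 * vv0 b (\<lambda>i. y (Suc i))"
    unfolding hpd_def hasse_X
    by (subst grad1[OF c]) (simp_all add: hmon_def e4_def e22_def lt4 c2_bit0[OF c] numeral_eq_Suc)
  have d3: "hpd {..<4} 4 (Xcoef b) 3 y = y 2 * vv0 b (\<lambda>i. y (Suc i)) + y 1 * vv1 b (\<lambda>i. y (Suc i))"
    unfolding hpd_def hasse_X
    by (subst grad2[OF c]) (simp_all add: hmon_def e4_def e22_def lt4 c2_bit0[OF c] numeral_eq_Suc)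
  have "(\<forall>u\<in>{..<4}. hpd {..<4} 4 (Xcoef b) u y = 0) \<longleftrightarrow>
    hpd {..<4} 4 (Xcoef b) 0 y = 0 \<and> hpd {..<4} 4 (Xcoef b) 1 y = 0 \<and> hpd {..<4} 4 (Xcoef b) 2 y = 0 \<and> hpd {..<4} 4 (Xcoef b) 3 y = 0"
    by (simp add: lt4)
  also have "\<dots> \<longleftrightarrow> Gv b (\<lambda>i. y (Suc i))"
    unfolding d0 d1 d2 d3 Gv_def by (simp add: numeral_eq_Suc)
  finally show ?thesis unfolding is_sing_vec_def h by blast
qed

section \<open>Projective classes\<close>

lemma pc_self: "(\<forall>v. v \<notin> V \<longrightarrow> x v = 0) \<Longrightarrow> x \<in> proj_class V x"
  unfolding proj_class_def by (auto intro!: exI[of _ 1])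

lemma pc_D:
  assumes "y \<in> proj_class V x" "\<forall>v. v \<notin> V \<longrightarrow> x v = 0"
  shows "\<exists>c. c \<noteq> 0 \<and> y = (\<lambda>v. c * x v)"
proof -
  from assms(1) obtain c where c: "c \<noteq> 0" "\<forall>v\<in>V. y v = c * x v" "\<forall>v. v \<notin> V \<longrightarrow> y v = 0"
    unfolding proj_class_def by auto
  have "y = (\<lambda>v. c * x v)"
  proof
    fix v show "y v = c * x v" using c assms(2) by (cases "v \<in> V") auto
  qed
  then show ?thesis using c by blast
qed

lemma pc_scale:
  fixes x :: "'v \<Rightarrow> 'a::field"
  assumes "c \<noteq> 0" "\<forall>v. v \<notin> V \<longrightarrow> x v = 0"
  shows "proj_class V (\<lambda>v. c * x v) = proj_class V x"
proof
  show "proj_class V (\<lambda>v. c * x v) \<subseteq> proj_class V x"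
  proof
    fix y assume "y \<in> proj_class V (\<lambda>v. c * x v)"
    then obtain d where "d \<noteq> 0" "\<forall>v\<in>V. y v = d * (c * x v)" "\<forall>v. v \<notin> V \<longrightarrow> y v = 0"
      unfolding proj_class_def by auto
    then show "y \<in> proj_class V x" unfolding proj_class_def using assms
      by (auto intro!: exI[of _ "d * c"] simp: mult.assoc)
  qed
next
  show "proj_class V x \<subseteq> proj_class V (\<lambda>v. c * x v)"
  proof
    fix y assume "y \<in> proj_class V x"
    then obtain d where "d \<noteq> 0" "\<forall>v\<in>V. y v = d * x v" "\<forall>v. v \<notin> V \<longrightarrow> y v = 0"
      unfolding proj_class_def by auto
    then show "y \<in> proj_class V (\<lambda>v. c * x v)" unfolding proj_class_def using assms
      by (auto intro!: exI[of _ "d / c"])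
  qed
qed

lemma norm_count:
  fixes S :: "('v \<Rightarrow> 'a::field) set"
  assumes out: "\<And>x. x \<in> S \<Longrightarrow> \<forall>v. v \<notin> V \<longrightarrow> x v = 0"
    and cone: "\<And>x c. x \<in> S \<Longrightarrow> c \<noteq> 0 \<Longrightarrow> (\<lambda>v. c * x v) \<in> S"
    and nz: "\<And>x. x \<in> S \<Longrightarrow> x k \<noteq> 0"
  shows "proj_class V ` S = proj_class V ` {x\<in>S. x k = 1}" "inj_on (proj_class V) {x\<in>S. x k = 1}"
proof -
  show "proj_class V ` S = proj_class V ` {x\<in>S. x k = 1}"
  proof
    show "proj_class V ` S \<subseteq> proj_class V ` {x\<in>S. x k = 1}"
    proof
      fix P assume "P \<in> proj_class V ` S"
      then obtain x where x: "x \<in> S" "P = proj_class V x" by auto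
      let ?x = "\<lambda>v. inverse (x k) * x v"
      have xk: "x k \<noteq> 0" by (rule nz[OF x(1)])
      have "?x \<in> S" using cone[OF x(1)] xk by simp
      moreover have "?x k = 1" using xk by simp
      ultimately have m: "?x \<in> {x\<in>S. x k = 1}" by blast
      have e1: "proj_class V ?x = proj_class V x" by (rule pc_scale) (use xk out[OF x(1)] in auto)
      show "P \<in> proj_class V ` {x\<in>S. x k = 1}" by (rule rev_image_eqI[OF m]) (simp only: e1 x(2))
    qed
  next
    show "proj_class V ` {x\<in>S. x k = 1} \<subseteq> proj_class V ` S" by (rule image_mono) blast
  qed
  show "inj_on (proj_class V) {x\<in>S. x k = 1}"
  proof
    fix x y assume x: "x \<in> {x\<in>S. x k = 1}" and y: "y \<in> {x\<in>S. x k = 1}"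
      and e: "proj_class V x = proj_class V y"
    have "y \<in> proj_class V y" by (rule pc_self) (use out y in blast)
    then have "y \<in> proj_class V x" using e by simp
    then obtain c where c: "c \<noteq> 0" "y = (\<lambda>v. c * x v)" using pc_D[of y V x] out x by blast
    then have "y k = c * x k" by simp
    then have "c = 1" using x y by simp
    then show "x = y" using c by simp
  qed
qed

section \<open>Homogeneity\<close>

lemma heval_scale:
  assumes "finite V"
  shows "heval V d c (\<lambda>v. t * x v) = t ^ d * heval V d c x"
proof -
  have "heval V d c (\<lambda>v. t * x v) = (\<Sum>m\<in>mons V d. t ^ d * (c m * (\<Prod>v\<in>V. x v ^ m v)))"
    unfolding heval_def
  proof (intro sum.cong refl)
    fix m assume m: "m \<in> mons V d"
    have "(\<Prod>v\<in>V. (t * x v) ^ m v) = (\<Prod>v\<in>V. t ^ m v) * (\<Prod>v\<in>V. x v ^ m v)"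
      by (simp add: power_mult_distrib prod.distrib)
    also have "(\<Prod>v\<in>V. t ^ m v) = t ^ d" using m by (simp add: power_sum[symmetric] mons_def)
    finally show "c m * (\<Prod>v\<in>V. (t * x v) ^ m v) = t ^ d * (c m * (\<Prod>v\<in>V. x v ^ m v))"
      by (simp add: algebra_simps)
  qed
  then show ?thesis by (simp add: heval_def sum_distrib_left)
qed

lemma vv_scale:
  "vv0 b (\<lambda>v. t * x v) = t^2 * vv0 b x" "vv1 b (\<lambda>v. t * x v) = t^2 * vv1 b x"
  "vv2 b (\<lambda>v. t * x v) = t^2 * vv2 b x"
  by (simp_all add: vv0_def vv1_def vv2_def power_mult_distrib algebra_simps)

lemma Gv_scale:
  fixes b :: "(nat \<Rightarrow> nat) \<Rightarrow> 'a::field"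
  assumes "t \<noteq> 0"
  shows "Gv b (\<lambda>v. t * x v) \<longleftrightarrow> Gv b x"
proof -
  have e: "\<And>p q :: 'a. t * p * (t^2 * q) = t^3 * (p * q)" by (simp add: power2_eq_square power3_eq_cube)
  show ?thesis unfolding Gv_def vv_scale e distrib_left[symmetric] using assms by simp
qed

lemma quartic_roots:
  fixes c :: "'a::alg_closed_field"
  assumes ch: "CHAR('a) = 2"
  shows "card {w. w^4 + w^2 + c = 0} = 2"
proof -
  obtain s where s: "s^2 = c" using nth_root_exists[of 2 c] by auto
  obtain r where r: "r^2 + r + s = 0"
  proof -
    define f where "f = (\<lambda>k::nat. if k = 0 then s else (1::'a))"
    have "\<exists>x. (\<Sum>k\<le>2. f k * x ^ k) = 0" by (rule alg_closed) (auto simp: f_def)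
    then obtain x where "(\<Sum>k\<le>2. f k * x ^ k) = 0" by blast
    then have "x^2 + x + s = 0" by (simp add: f_def numeral_2_eq_2 algebra_simps)
    then show ?thesis by (rule that)
  qed
  have two: "(2::'a) = 0" using c2_bit0[OF ch, of Num.One] by simp
  have key: "w^4 + w^2 + c = 0 \<longleftrightarrow> w = r \<or> w = r + 1" for w
  proof -
    have "(w^2 + w + s)^2 = w^4 + w^2 + s^2 + 2 * (w^3 + w^2 * s + w * s)"
      by (simp add: power2_eq_square power3_eq_cube power4_eq_xxxx algebra_simps)
    then have e1: "w^4 + w^2 + c = (w^2 + w + s)^2" using two s by simp
    have "w^2 + w + s = (w^2 + w + s) - (r^2 + r + s)" using r by simp
    also have "\<dots> = (w - r) * (w + r + 1)" by (simp add: power2_eq_square algebra_simps)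
    finally have e2: "w^2 + w + s = (w - r) * (w + r + 1)" .
    have m: "w + r + 1 = 0 \<longleftrightarrow> w = r + 1"
    proof
      assume "w + r + 1 = 0" then have "w + (r + 1) = 0" by (simp add: add.assoc)
      then have "w = - (r + 1)" by (simp only: eq_neg_iff_add_eq_0)
      then show "w = r + 1" using uminus_CHAR_2[OF ch] by metis
    next
      assume "w = r + 1" then show "w + r + 1 = 0"
        using c2_add_self[OF ch, of "r+1"] by (simp add: algebra_simps)
    qed
    show ?thesis unfolding e1 e2 using m by simp
  qed
  have "{w. w^4 + w^2 + c = 0} = {r, r + 1}" using key by auto
  then show ?thesis by simp
qed

lemma nzvec_scale: "x \<in> nzvec V \<Longrightarrow> (t::'a::field) \<noteq> 0 \<Longrightarrow> (\<lambda>v. t * x v) \<in> nzvec V"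
  by (auto simp: nzvec_def)

definition S1 :: "((nat \<Rightarrow> nat) \<Rightarrow> 'a::field) \<Rightarrow> (nat \<Rightarrow> 'a) set" where
  "S1 b = {x \<in> nzvec {..<3}. Gv b x}"

lemma CB_S1: "CHAR('a) = 2 \<Longrightarrow> CB (b :: (nat \<Rightarrow> nat) \<Rightarrow> 'a::field) = proj_class {..<3} ` S1 b"
  unfolding CB_def S1_def using grad_iff[of b] by simp

lemma S1_cone: "x \<in> S1 b \<Longrightarrow> t \<noteq> 0 \<Longrightarrow> (\<lambda>v. t * x v) \<in> S1 b"
  by (simp add: S1_def nzvec_scale Gv_scale)

lemma sing_cone:
  fixes b :: "(nat \<Rightarrow> nat) \<Rightarrow> 'a::field"
  assumes ch: "CHAR('a) = 2" and y: "is_sing_vec {..<4} 4 (Xcoef b) y" and t: "t \<noteq> 0"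
  shows "is_sing_vec {..<4} 4 (Xcoef b) (\<lambda>v. t * y v)"
proof -
  have y': "y \<in> nzvec {..<4}" "y 0 ^ 4 + y 0 ^ 2 * y 1 ^ 2 + heval {..<3} 4 b (\<lambda>i. y (Suc i)) = 0"
    "Gv b (\<lambda>i. y (Suc i))" using y sing_iff[OF ch] by blast+
  have "heval {..<3} 4 b (\<lambda>i. t * y (Suc i)) = t^4 * heval {..<3} 4 b (\<lambda>i. y (Suc i))"
    using heval_scale[of "{..<3::nat}" 4 b t "\<lambda>i. y (Suc i)"] by simp
  then have "(t * y 0) ^ 4 + (t * y 0) ^ 2 * (t * y 1) ^ 2 + heval {..<3} 4 b (\<lambda>i. t * y (Suc i))
     = t^4 * (y 0 ^ 4 + y 0 ^ 2 * y 1 ^ 2 + heval {..<3} 4 b (\<lambda>i. y (Suc i)))"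
    by (simp add: power_mult_distrib algebra_simps power4_eq_xxxx power2_eq_square)
  then have "(t * y 0) ^ 4 + (t * y 0) ^ 2 * (t * y 1) ^ 2 + heval {..<3} 4 b (\<lambda>i. t * y (Suc i)) = 0"
    using y' by simp
  moreover have "Gv b (\<lambda>i. t * y (Suc i))" using Gv_scale[OF t, of b "\<lambda>i. y (Suc i)"] y' by simp
  ultimately show ?thesis using sing_iff[OF ch] nzvec_scale[OF y'(1) t] by simp
qed

lemma sing_S1:
  fixes b :: "(nat \<Rightarrow> nat) \<Rightarrow> 'a::field"
  assumes ch: "CHAR('a) = 2" and y: "is_sing_vec {..<4} 4 (Xcoef b) y"
  shows "(\<lambda>i. y (Suc i)) \<in> S1 b"
proof -
  have y': "y \<in> nzvec {..<4}" "y 0 ^ 4 + y 0 ^ 2 * y 1 ^ 2 + heval {..<3} 4 b (\<lambda>i. y (Suc i)) = 0"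
    "Gv b (\<lambda>i. y (Suc i))" using y sing_iff[OF ch] by blast+
  have out: "\<forall>v. v \<notin> {..<3} \<longrightarrow> y (Suc v) = 0" using y'(1) by (auto simp: nzvec_def)
  have "\<exists>v\<in>{..<3}. y (Suc v) \<noteq> 0"
  proof (rule ccontr)
    assume "\<not> ?thesis"
    then have z: "\<forall>v. y (Suc v) = 0" using out by auto
    then have "(\<lambda>i. y (Suc i)) = (\<lambda>i. 0 * y (Suc i))" by simp
    then have "heval {..<3} 4 b (\<lambda>i. y (Suc i)) = 0"
      using heval_scale[of "{..<3::nat}" 4 b 0 "\<lambda>i. y (Suc i)"] by simp
    then have "y 0 = 0" using y'(2) z by simp
    then have "\<forall>v. y v = 0" using z by (metis not0_implies_Suc)
    then show False using y'(1) by (auto simp: nzvec_def)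
  qed
  then show ?thesis using out y'(3) by (auto simp: S1_def nzvec_def)
qed

definition Wr :: "((nat \<Rightarrow> nat) \<Rightarrow> 'a::field) \<Rightarrow> (nat \<Rightarrow> 'a) \<Rightarrow> 'a set" where
  "Wr b x = {w. w^4 + w^2 + heval {..<3} 4 b x = 0}"

definition yext :: "'a \<Rightarrow> (nat \<Rightarrow> 'a) \<Rightarrow> nat \<Rightarrow> 'a::zero" where
  "yext w x = (\<lambda>i. case i of 0 \<Rightarrow> w | Suc j \<Rightarrow> x j)"

lemma part1:
  fixes b :: "(nat \<Rightarrow> nat) \<Rightarrow> 'a::alg_closed_field"
  assumes ch: "CHAR('a) = 2" and fin: "finite (CB b)" and nz: "\<forall>P\<in>CB b. \<forall>x\<in>P. x 0 \<noteq> 0"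
  shows "finite (Sing {..<4} 4 (Xcoef b)) \<and> card (Sing {..<4} 4 (Xcoef b)) = 2 * card (CB b)"
proof -
  define S2 where "S2 = {y. is_sing_vec {..<4} 4 (Xcoef b) y}"
  define N1 where "N1 = {x\<in>S1 b. x 0 = 1}"
  define N2 where "N2 = {y\<in>S2. y 1 = 1}"
  have CB: "CB b = proj_class {..<3} ` S1 b" by (rule CB_S1[OF ch])
  have out1: "\<And>x. x \<in> S1 b \<Longrightarrow> \<forall>v. v \<notin> {..<3} \<longrightarrow> x v = 0" by (auto simp: S1_def nzvec_def)
  have nz1: "\<And>x. x \<in> S1 b \<Longrightarrow> x 0 \<noteq> 0"
  proof -
    fix x assume x: "x \<in> S1 b"
    then have "proj_class {..<3} x \<in> CB b" unfolding CB by blast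
    moreover have "x \<in> proj_class {..<3} x" by (rule pc_self) (use out1[OF x] in blast)
    ultimately show "x 0 \<noteq> 0" using nz by blast
  qed
  have cone1: "\<And>x t. x \<in> S1 b \<Longrightarrow> t \<noteq> 0 \<Longrightarrow> (\<lambda>v. t * x v) \<in> S1 b" by (rule S1_cone)
  have nc1_1: "proj_class {..<3} ` S1 b = proj_class {..<3} ` N1"
    unfolding N1_def by (rule norm_count(1)[OF out1 cone1 nz1])
  have nc1_2: "inj_on (proj_class {..<3}) N1"
    unfolding N1_def by (rule norm_count(2)[OF out1 cone1 nz1])
  note nc1 = nc1_1 nc1_2
  have card1: "card (CB b) = card N1" unfolding CB nc1(1) using nc1(2) by (rule card_image)
  have finN1: "finite N1" using fin unfolding CB nc1(1) using nc1(2) finite_imageD by blast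
  have out2: "\<And>y. y \<in> S2 \<Longrightarrow> \<forall>v. v \<notin> {..<4} \<longrightarrow> y v = 0"
    by (auto simp: S2_def is_sing_vec_def nzvec_def)
  have cone2: "\<And>y t. y \<in> S2 \<Longrightarrow> t \<noteq> 0 \<Longrightarrow> (\<lambda>v. t * y v) \<in> S2"
    unfolding S2_def using sing_cone[OF ch] by blast
  have nz2: "\<And>y. y \<in> S2 \<Longrightarrow> y 1 \<noteq> 0"
  proof -
    fix y assume "y \<in> S2"
    then have "(\<lambda>i. y (Suc i)) \<in> S1 b" using sing_S1[OF ch] by (simp add: S2_def)
    then show "y 1 \<noteq> 0" using nz1 by fastforce
  qed
  have nc2_1: "proj_class {..<4} ` S2 = proj_class {..<4} ` N2"
    unfolding N2_def by (rule norm_count(1)[OF out2 cone2 nz2])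
  have nc2_2: "inj_on (proj_class {..<4}) N2"
    unfolding N2_def by (rule norm_count(2)[OF out2 cone2 nz2])
  note nc2 = nc2_1 nc2_2
  have Sing: "Sing {..<4} 4 (Xcoef b) = proj_class {..<4} ` S2" by (simp add: Sing_def S2_def)
  have fW2: "\<And>x. card (Wr b x) = 2"
    using quartic_roots[OF ch] by (auto simp: Wr_def)
  have fW1: "\<And>x. finite (Wr b x)"
    by (rule card_ge_0_finite) (simp add: fW2)
  note fW = fW1 fW2
  have img: "(\<lambda>y. ((\<lambda>i. y (Suc i)), y 0)) ` N2 = Sigma N1 (Wr b)"
  proof
    show "(\<lambda>y. ((\<lambda>i. y (Suc i)), y 0)) ` N2 \<subseteq> Sigma N1 (Wr b)"
    proof
      fix p assume "p \<in> (\<lambda>y. ((\<lambda>i. y (Suc i)), y 0)) ` N2"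
      then obtain y where y: "y \<in> N2" "p = ((\<lambda>i. y (Suc i)), y 0)" by blast
      have s: "is_sing_vec {..<4} 4 (Xcoef b) y" "y 1 = 1" using y by (auto simp: N2_def S2_def)
      have "(\<lambda>i. y (Suc i)) \<in> N1" using sing_S1[OF ch s(1)] s(2) by (simp add: N1_def)
      moreover have "y 0 \<in> Wr b (\<lambda>i. y (Suc i))" using s sing_iff[OF ch] by (simp add: Wr_def)
      ultimately show "p \<in> Sigma N1 (Wr b)" using y by simp
    qed
    show "Sigma N1 (Wr b) \<subseteq> (\<lambda>y. ((\<lambda>i. y (Suc i)), y 0)) ` N2"
    proof
      fix p assume p: "p \<in> Sigma N1 (Wr b)"
      then obtain x w where xw: "p = (x, w)" "x \<in> N1" "w \<in> Wr b x" by blast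
      have x: "x \<in> nzvec {..<3}" "Gv b x" "x 0 = 1" using xw by (auto simp: N1_def S1_def)
      let ?y = "yext w x"
      have ys: "(\<lambda>i. ?y (Suc i)) = x" "?y 0 = w" "?y 1 = 1" using x by (auto simp: yext_def)
      have "?y \<in> nzvec {..<4}"
      proof -
        have "\<forall>v. v \<notin> {..<4} \<longrightarrow> ?y v = 0"
        proof (intro allI impI)
          fix v :: nat assume "v \<notin> {..<4}"
          then obtain j where "v = Suc j" "j \<notin> {..<3}" by (cases v) auto
          then show "?y v = 0" using x(1) by (simp add: yext_def nzvec_def)
        qed
        moreover have "?y 1 \<noteq> 0" using ys by simp
        ultimately show ?thesis by (auto simp: nzvec_def)
      qed
      then have "is_sing_vec {..<4} 4 (Xcoef b) ?y" using sing_iff[OF ch] ys x xw(3) by (simp add: Wr_def)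
      then have yN2: "?y \<in> N2" using ys by (simp add: N2_def S2_def)
      show "p \<in> (\<lambda>y. ((\<lambda>i. y (Suc i)), y 0)) ` N2" by (rule rev_image_eqI[OF yN2]) (simp only: ys xw(1))
    qed
  qed
  have inj: "inj_on (\<lambda>y. ((\<lambda>i. y (Suc i)), y 0)) N2"
  proof
    fix y z assume "y \<in> N2" "z \<in> N2" and e: "((\<lambda>i. y (Suc i)), y 0) = ((\<lambda>i. z (Suc i)), z 0)"
    have e1: "(\<lambda>i. y (Suc i)) = (\<lambda>i. z (Suc i))" and e2: "y 0 = z 0" using e by simp_all
    show "y = z"
    proof
      fix v show "y v = z v"
      proof (cases v)
        case 0 then show ?thesis using e2 by simp
      next
        case (Suc j) then show ?thesis using fun_cong[OF e1, of j] by simp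
      qed
    qed
  qed
  have finSig: "finite (Sigma N1 (Wr b))" by (rule finite_SigmaI[OF finN1 fW1])
  have "card (Sigma N1 (Wr b)) = (\<Sum>a\<in>N1. card (Wr b a))" by (rule card_SigmaI[OF finN1]) (simp add: fW1)
  also have "\<dots> = (\<Sum>a\<in>N1. 2)" by (simp only: fW2)
  finally have cardSig: "card (Sigma N1 (Wr b)) = 2 * card N1" by simp
  have cN2: "card N2 = card (Sigma N1 (Wr b))" using card_image[OF inj] img by simp
  have finN2: "finite N2" by (rule finite_imageD[OF _ inj]) (simp only: img finSig)
  have "card (Sing {..<4} 4 (Xcoef b)) = card N2" unfolding Sing nc2(1) using nc2(2) by (rule card_image)
  moreover have "finite (Sing {..<4} 4 (Xcoef b))" unfolding Sing nc2(1) using finN2 by simp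
  ultimately show ?thesis using card1 cN2 cardSig by simp
qed

definition polyf :: "'v set \<Rightarrow> (('v \<Rightarrow> 'a::comm_ring_1) \<Rightarrow> 'a) \<Rightarrow> bool" where
  "polyf V f \<longleftrightarrow> (\<exists>D c. \<forall>x. f x = peval V D c x)"

lemma finite_mons_le: "finite V \<Longrightarrow> finite (mons_le V D)"
proof -
  assume V: "finite V"
  have "mons_le V D \<subseteq> {m. \<forall>x. (x \<in> V \<longrightarrow> m x \<in> {..D}) \<and> (x \<notin> V \<longrightarrow> m x = 0)}"
  proof
    fix m assume m: "m \<in> mons_le V D"
    { fix x assume "x \<in> V"
      then have "m x \<le> sum m V" using V by (intro member_le_sum) auto
      then have "m x \<le> D" using m by (simp add: mons_le_def) }
    then show "m \<in> {m. \<forall>x. (x \<in> V \<longrightarrow> m x \<in> {..D}) \<and> (x \<notin> V \<longrightarrow> m x = 0)}"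
      using m by (auto simp: mons_le_def)
  qed
  moreover have "finite {m. \<forall>x. (x \<in> V \<longrightarrow> m x \<in> {..D}) \<and> (x \<notin> V \<longrightarrow> m x = 0)}"
    using V by (intro finite_set_of_finite_funs) auto
  ultimately show ?thesis by (rule finite_subset)
qed

lemma peval_extend:
  assumes V: "finite V" and "D1 \<le> D"
  shows "peval V D1 c x = peval V D (\<lambda>m. if m \<in> mons_le V D1 then c m else 0) x"
proof -
  have sub: "mons_le V D1 \<subseteq> mons_le V D" using assms(2) by (auto simp: mons_le_def)
  show ?thesis unfolding peval_def
    by (rule sum.mono_neutral_cong_left[OF finite_mons_le[OF V] sub]) auto
qed

lemma polyf_const: "finite V \<Longrightarrow> polyf V (\<lambda>_. k)"
proof -
  assume V: "finite V"
  have "mons_le V 0 = {\<lambda>_. 0}"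
  proof
    show "mons_le V 0 \<subseteq> {\<lambda>_. 0}"
    proof
      fix m assume m: "m \<in> mons_le V 0"
      have "\<forall>v\<in>V. m v = 0" using m V by (auto simp: mons_le_def)
      then have "m = (\<lambda>_. 0)" using m by (auto simp: mons_le_def fun_eq_iff)
      then show "m \<in> {\<lambda>_. 0}" by simp
    qed
  qed (auto simp: mons_le_def)
  then have "\<forall>x. k = peval V 0 (\<lambda>_. k) x" by (simp add: peval_def)
  then show ?thesis unfolding polyf_def by blast
qed

lemma polyf_var:
  assumes V: "finite V" and v: "v \<in> V"
  shows "polyf V (\<lambda>x. x v)"
proof -
  define e where "e = (\<lambda>u. if u = v then 1 else (0::nat))"
  have e: "e \<in> mons_le V 1"
  proof -
    have "sum e V = 1" using V v unfolding e_def by (simp add: sum.delta)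
    then show ?thesis using v by (auto simp: mons_le_def e_def)
  qed
  have "peval V 1 (\<lambda>m. if m = e then 1 else 0) x = (\<Prod>u\<in>V. x u ^ e u)" for x
  proof -
    have "peval V 1 (\<lambda>m. if m = e then 1 else 0) x = (\<Sum>m\<in>mons_le V 1. if m = e then (\<Prod>u\<in>V. x u ^ m u) else 0)"
      unfolding peval_def by (intro sum.cong) auto
    also have "\<dots> = (\<Prod>u\<in>V. x u ^ e u)" using e finite_mons_le[OF V] by (simp add: sum.delta')
    finally show ?thesis .
  qed
  moreover have "(\<Prod>u\<in>V. x u ^ e u) = x v" for x
  proof -
    have "(\<Prod>u\<in>V. x u ^ e u) = (\<Prod>u\<in>V. if u = v then x u else 1)"
      by (intro prod.cong) (auto simp: e_def)
    also have "\<dots> = x v" using V v by (simp add: prod.delta)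
    finally show ?thesis .
  qed
  ultimately show ?thesis unfolding polyf_def by metis
qed

lemma polyf_add:
  assumes V: "finite V" and f: "polyf V f" and g: "polyf V g"
  shows "polyf V (\<lambda>x. f x + g x)"
proof -
  obtain D1 c1 where 1: "\<And>x. f x = peval V D1 c1 x" using f unfolding polyf_def by blast
  obtain D2 c2 where 2: "\<And>x. g x = peval V D2 c2 x" using g unfolding polyf_def by blast
  define D where "D = max D1 D2"
  define c where "c = (\<lambda>m. (if m \<in> mons_le V D1 then c1 m else 0) + (if m \<in> mons_le V D2 then c2 m else 0))"
  have "f x + g x = peval V D c x" for x
  proof -
    have e1: "peval V D1 c1 x = peval V D (\<lambda>m. if m \<in> mons_le V D1 then c1 m else 0) x"
      by (rule peval_extend[OF V]) (simp add: D_def)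
    have e2: "peval V D2 c2 x = peval V D (\<lambda>m. if m \<in> mons_le V D2 then c2 m else 0) x"
      by (rule peval_extend[OF V]) (simp add: D_def)
    show ?thesis unfolding 1 2 e1 e2 by (simp add: peval_def c_def distrib_right sum.distrib)
  qed
  then show ?thesis unfolding polyf_def by blast
qed

lemma polyf_mult:
  assumes V: "finite V" and f: "polyf V f" and g: "polyf V g"
  shows "polyf V (\<lambda>x. f x * g x)"
proof -
  obtain D1 c1 where 1: "\<And>x. f x = peval V D1 c1 x" using f unfolding polyf_def by blast
  obtain D2 c2 where 2: "\<And>x. g x = peval V D2 c2 x" using g unfolding polyf_def by blast
  define P where "P = mons_le V D1 \<times> mons_le V D2"
  define c where "c = (\<lambda>m. \<Sum>p\<in>{p\<in>P. (\<lambda>u. fst p u + snd p u) = m}. c1 (fst p) * c2 (snd p))"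
  have finP: "finite P" using V by (simp add: P_def finite_mons_le)
  have "f x * g x = peval V (D1 + D2) c x" for x
  proof -
    have "f x * g x = (\<Sum>p\<in>P. c1 (fst p) * c2 (snd p) * (\<Prod>u\<in>V. x u ^ (fst p u + snd p u)))"
      unfolding 1 2 peval_def P_def sum_product sum.cartesian_product
      by (intro sum.cong refl) (auto simp: power_add prod.distrib algebra_simps)
    also have "\<dots> = (\<Sum>m\<in>mons_le V (D1 + D2). \<Sum>p\<in>{p\<in>P. (\<lambda>u. fst p u + snd p u) = m}.
        c1 (fst p) * c2 (snd p) * (\<Prod>u\<in>V. x u ^ (fst p u + snd p u)))"
    proof (rule sum.group[symmetric, OF finP finite_mons_le[OF V]])
      show "(\<lambda>p. \<lambda>u. fst p u + snd p u) ` P \<subseteq> mons_le V (D1 + D2)"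
      proof
        fix m assume "m \<in> (\<lambda>p. \<lambda>u. fst p u + snd p u) ` P"
        then obtain m1 m2 where m: "m1 \<in> mons_le V D1" "m2 \<in> mons_le V D2" "m = (\<lambda>u. m1 u + m2 u)"
          by (auto simp: P_def)
        have "sum m V = sum m1 V + sum m2 V" using m(3) by (simp add: sum.distrib)
        then show "m \<in> mons_le V (D1 + D2)" using m by (auto simp: mons_le_def)
      qed
    qed
    also have "\<dots> = peval V (D1 + D2) c x"
      unfolding peval_def c_def sum_distrib_right
      by (intro sum.cong refl) auto
    finally show ?thesis .
  qed
  then show ?thesis unfolding polyf_def by blast
qed

lemma polyf_neg:
  assumes V: "finite V" and f: "polyf V f"
  shows "polyf V (\<lambda>x. - f x)"
proof -
  have "polyf V (\<lambda>x. (- 1) * f x)" by (rule polyf_mult[OF V polyf_const[OF V] f])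
  then show ?thesis by simp
qed

lemma polyf_diff:
  assumes V: "finite V" and f: "polyf V f" and g: "polyf V g"
  shows "polyf V (\<lambda>x. f x - g x)"
  using polyf_add[OF V f polyf_neg[OF V g]] by simp

lemma polyf_pow2:
  assumes V: "finite V" and f: "polyf V f"
  shows "polyf V (\<lambda>x. f x ^ 2)"
  using polyf_mult[OF V f f] by (simp add: power2_eq_square)

section \<open>Roots of an additive polynomial\<close>

lemma size_card_mset: "(\<forall>x. count A x \<le> 1) \<Longrightarrow> size A = card (set_mset A)"
proof (induction A)
  case empty then show ?case by simp
next
  case (add x A)
  have "count (add_mset x A) x \<le> 1" using add.prems by blast
  then have "count A x = 0" by simp
  then have "x \<notin># A" by (simp add: not_in_iff)
  moreover have "\<forall>y. count A y \<le> 1"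
  proof
    fix y
    have "count A y \<le> count (add_mset x A) y" by simp
    moreover have "count (add_mset x A) y \<le> 1" using add.prems by blast
    ultimately show "count A y \<le> 1" by linarith
  qed
  ultimately show ?case using add.IH by simp
qed

lemma double_root_pderiv:
  fixes p :: "'a::idom poly"
  assumes "p = [:-a, 1:] * ([:-a, 1:] * q)"
  shows "poly (pderiv p) a = 0"
proof -
  have "poly (pderiv p) a = poly [:-a, 1:] a * poly (pderiv ([:-a, 1:] * q)) a
      + poly [:-a, 1:] a * poly q a * poly (pderiv [:-a, 1:]) a"
    by (simp only: assms pderiv_mult poly_mult poly_add mult.assoc)
  moreover have "poly [:-a, 1:] a = 0" by simp
  ultimately show ?thesis by simp
qed

lemma roots8:
  fixes a0 a1 a2 :: "'a::alg_closed_field"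
  assumes ch: "CHAR('a) = 2" and a0: "a0 \<noteq> 0"
  shows "card {t. t^8 + a2 * t^4 + a1 * t^2 + a0 * t = 0} = 8"
proof -
  define p where "p = [:0, a0, a1, 0, a2, 0, 0, 0, 1:]"
  have pe: "poly p t = t^8 + a2 * t^4 + a1 * t^2 + a0 * t" for t
  proof -
    have "poly p t = t * (a0 + t * (a1 + t * (t * (a2 + t * (t * (t * t))))))"
      unfolding p_def by (simp only: poly_pCons poly_0 add_0_left mult_1_right mult_zero_right add_0_right)
    also have "\<dots> = t^8 + a2 * t^4 + a1 * t^2 + a0 * t"
      by (simp only: power_numeral_even power_numeral_odd) (simp add: algebra_simps)
    finally show ?thesis .
  qed
  have dp: "poly (pderiv p) t = a0" for t
    unfolding p_def
    apply (simp only: pderiv_pCons pderiv_0)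
    apply (simp add: c2_bit0[OF ch])
    done
  have p0: "p \<noteq> 0" by (simp add: p_def)
  have deg: "degree p = 8" by (simp add: p_def)
  have lc: "lead_coeff p = 1" by (simp add: p_def)
  obtain A where A: "size A = degree p" "p = smult (lead_coeff p) (\<Prod>x\<in>#A. [:-x, 1:])"
    using alg_closed_imp_factorization[OF p0] by blast
  have pA: "p = (\<Prod>x\<in>#A. [:-x, 1:])" using A(2) lc by simp
  have roots: "{t. poly p t = 0} = set_mset A"
  proof -
    have "poly p t = 0 \<longleftrightarrow> t \<in># A" for t
    proof -
      have "poly p t = (\<Prod>x\<in>#A. poly [:-x, 1:] t)" unfolding pA by (rule poly_prod_mset)
      also have "\<dots> = 0 \<longleftrightarrow> 0 \<in># image_mset (\<lambda>x. poly [:-x, 1:] t) A" by simp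
      also have "\<dots> \<longleftrightarrow> t \<in># A" by auto
      finally show ?thesis .
    qed
    then show ?thesis by auto
  qed
  have cnt: "\<forall>x. count A x \<le> 1"
  proof (rule ccontr)
    assume "\<not> ?thesis"
    then obtain x where "\<not> count A x \<le> 1" by blast
    then have "count A x \<ge> 2" by simp
    then have "x \<in># A" using not_in_iff[of x A] by auto
    moreover have "x \<in># A - {#x#}" using \<open>count A x \<ge> 2\<close> by (simp add: in_diff_count)
    ultimately have "x \<in># A" "x \<in># A - {#x#}" by blast+
    then obtain B where B: "A = add_mset x (add_mset x B)"
      by (metis insert_DiffM)
    have "p = [:-x, 1:] * ([:-x, 1:] * (\<Prod>y\<in>#B. [:-y, 1:]))" unfolding pA B by (simp add: mult.assoc)
    then have "poly (pderiv p) x = 0" by (rule double_root_pderiv)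
    then show False using dp a0 by simp
  qed
  have "card {t. poly p t = 0} = 8" unfolding roots using size_card_mset[OF cnt] A(1) deg by simp
  then show ?thesis unfolding pe .
qed

section \<open>3x3 linear algebra\<close>

definition dot3 :: "(nat \<Rightarrow> 'a::comm_ring_1) \<Rightarrow> (nat \<Rightarrow> 'a) \<Rightarrow> 'a" where
  "dot3 p z = p 0 * z 0 + p 1 * z 1 + p 2 * z 2"

definition det3 :: "(nat \<Rightarrow> 'a::comm_ring_1) \<Rightarrow> (nat \<Rightarrow> 'a) \<Rightarrow> (nat \<Rightarrow> 'a) \<Rightarrow> 'a" where
  "det3 p q r = p 0 * (q 1 * r 2 - q 2 * r 1) - p 1 * (q 0 * r 2 - q 2 * r 0) + p 2 * (q 0 * r 1 - q 1 * r 0)"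

definition cram :: "(nat \<Rightarrow> 'a::field) \<Rightarrow> (nat \<Rightarrow> 'a) \<Rightarrow> (nat \<Rightarrow> 'a) \<Rightarrow> 'a \<Rightarrow> 'a \<Rightarrow> 'a \<Rightarrow> nat \<Rightarrow> 'a" where
  "cram p q r a b c = (\<lambda>i. if i = 0 then det3 (\<lambda>j. if j = 0 then a else p j) (\<lambda>j. if j = 0 then b else q j) (\<lambda>j. if j = 0 then c else r j) / det3 p q r
     else if i = 1 then det3 (\<lambda>j. if j = 1 then a else p j) (\<lambda>j. if j = 1 then b else q j) (\<lambda>j. if j = 1 then c else r j) / det3 p q r
     else if i = 2 then det3 (\<lambda>j. if j = 2 then a else p j) (\<lambda>j. if j = 2 then b else q j) (\<lambda>j. if j = 2 then c else r j) / det3 p q r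
     else 0)"

lemma la_solve:
  fixes p q r :: "nat \<Rightarrow> 'a::field"
  assumes d: "det3 p q r \<noteq> 0"
  shows "dot3 p (cram p q r a b c) = a" "dot3 q (cram p q r a b c) = b" "dot3 r (cram p q r a b c) = c"
    "\<And>i. i \<ge> 3 \<Longrightarrow> cram p q r a b c i = 0"
proof -
  define D where "D = det3 p q r"
  define N0 where "N0 = det3 (\<lambda>j. if j = 0 then a else p j) (\<lambda>j. if j = 0 then b else q j) (\<lambda>j. if j = 0 then c else r j)"
  define N1 where "N1 = det3 (\<lambda>j. if j = 1 then a else p j) (\<lambda>j. if j = 1 then b else q j) (\<lambda>j. if j = 1 then c else r j)"
  define N2 where "N2 = det3 (\<lambda>j. if j = 2 then a else p j) (\<lambda>j. if j = 2 then b else q j) (\<lambda>j. if j = 2 then c else r j)"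
  have cr: "cram p q r a b c = (\<lambda>i. if i = 0 then N0 / D else if i = 1 then N1 / D else if i = 2 then N2 / D else 0)"
    unfolding cram_def N0_def N1_def N2_def D_def by simp
  have i1: "p 0 * N0 + p 1 * N1 + p 2 * N2 = a * D"
    unfolding N0_def N1_def N2_def D_def det3_def by (simp add: algebra_simps)
  have i2: "q 0 * N0 + q 1 * N1 + q 2 * N2 = b * D"
    unfolding N0_def N1_def N2_def D_def det3_def by (simp add: algebra_simps)
  have i3: "r 0 * N0 + r 1 * N1 + r 2 * N2 = c * D"
    unfolding N0_def N1_def N2_def D_def det3_def by (simp add: algebra_simps)
  have dD: "D \<noteq> 0" using d by (simp add: D_def)
  have g: "u 0 * (N0 / D) + u 1 * (N1 / D) + u 2 * (N2 / D) = (u 0 * N0 + u 1 * N1 + u 2 * N2) / D" for u :: "nat \<Rightarrow> 'a"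
    by (simp add: add_divide_distrib)
  show "dot3 p (cram p q r a b c) = a" unfolding cr dot3_def using g[of p] i1 dD by simp
  show "dot3 q (cram p q r a b c) = b" unfolding cr dot3_def using g[of q] i2 dD by simp
  show "dot3 r (cram p q r a b c) = c" unfolding cr dot3_def using g[of r] i3 dD by simp
  show "\<And>i. i \<ge> 3 \<Longrightarrow> cram p q r a b c i = 0" unfolding cr by simp
qed

lemma la_unique:
  fixes p q r :: "nat \<Rightarrow> 'a::field"
  assumes d: "det3 p q r \<noteq> 0" and e: "dot3 p z = dot3 p z'" "dot3 q z = dot3 q z'" "dot3 r z = dot3 r z'"
  shows "z 0 = z' 0" "z 1 = z' 1" "z 2 = z' 2"
proof -
  define w where "w = (\<lambda>i. z i - z' i)"
  have h: "dot3 p w = 0" "dot3 q w = 0" "dot3 r w = 0" using e by (simp_all add: dot3_def w_def algebra_simps)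
  have "det3 p q r * w 0 = 0" "det3 p q r * w 1 = 0" "det3 p q r * w 2 = 0"
    using h unfolding dot3_def det3_def by algebra+
  then show "z 0 = z' 0" "z 1 = z' 1" "z 2 = z' 2" using d by (simp_all add: w_def)
qed

lemma la_combo:
  fixes p q r s :: "nat \<Rightarrow> 'a::field"
  assumes d: "det3 p q r \<noteq> 0"
  shows "\<exists>a0 a1 a2. \<forall>j<3. s j = a0 * p j + a1 * q j + a2 * r j"
proof -
  let ?P = "\<lambda>j. if j = 0 then p 0 else if j = 1 then q 0 else r 0"
  let ?Q = "\<lambda>j. if j = 0 then p 1 else if j = 1 then q 1 else r 1"
  let ?R = "\<lambda>j. if j = 0 then p 2 else if j = 1 then q 2 else r 2"
  have dT: "det3 ?P ?Q ?R \<noteq> 0" using d unfolding det3_def by (simp add: algebra_simps)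
  define z where "z = cram ?P ?Q ?R (s 0) (s 1) (s 2)"
  have "dot3 ?P z = s 0" "dot3 ?Q z = s 1" "dot3 ?R z = s 2" unfolding z_def using la_solve[OF dT] by blast+
  then have "\<forall>j<3. s j = z 0 * p j + z 1 * q j + z 2 * r j"
    unfolding all_lt3 by (simp add: dot3_def algebra_simps)
  then show ?thesis by blast
qed

lemma det3_combo:
  fixes p q r s :: "nat \<Rightarrow> 'a::comm_ring_1"
  assumes "\<forall>j<3. s j = a0 * p j + a1 * q j + a2 * r j"
  shows "det3 s q r = a0 * det3 p q r"
  using assms unfolding all_lt3 det3_def by (simp add: algebra_simps)

lemma frob2:
  fixes a b :: "'a::comm_ring_1"
  assumes ch: "CHAR('a) = 2"
  shows "(a + b)^2 = a^2 + b^2"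
proof -
  have "(a + b)^2 = a^2 + b^2 + (a*b + a*b)" by (simp add: power2_eq_square algebra_simps)
  then show ?thesis using c2_add_self[OF ch, of "a*b"] by simp
qed

definition sqv :: "(nat \<Rightarrow> 'a::comm_ring_1) \<Rightarrow> nat \<Rightarrow> 'a" where
  "sqv r = (\<lambda>j. r j ^ 2)"

definition Cz :: "(nat \<Rightarrow> nat \<Rightarrow> 'a::comm_ring_1) \<Rightarrow> (nat \<Rightarrow> 'a) \<Rightarrow> nat \<Rightarrow> 'a" where
  "Cz C z = (\<lambda>i. C i 0 * z 0 + C i 1 * z 1 + C i 2 * z 2)"

definition tw :: "(nat \<Rightarrow> nat \<Rightarrow> 'a::comm_ring_1) \<Rightarrow> (nat \<Rightarrow> 'a) \<Rightarrow> nat \<Rightarrow> 'a" where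
  "tw C r = (\<lambda>j. r 0 ^ 2 * C 0 j + r 1 ^ 2 * C 1 j + r 2 ^ 2 * C 2 j)"

definition e0 :: "nat \<Rightarrow> 'a::comm_ring_1" where "e0 = (\<lambda>j. if j = 0 then 1 else 0)"

definition Tset :: "(nat \<Rightarrow> nat \<Rightarrow> 'a::comm_ring_1) \<Rightarrow> (nat \<Rightarrow> 'a) set" where
  "Tset C = {z. (\<forall>i. i \<ge> 3 \<longrightarrow> z i = 0) \<and> (\<forall>i<3. z i ^ 2 = Cz C z i)}"

lemma dot_frob:
  fixes r z :: "nat \<Rightarrow> 'a::comm_ring_1"
  assumes ch: "CHAR('a) = 2"
  shows "(dot3 r z)^2 = dot3 (sqv r) (sqv z)"
  unfolding dot3_def sqv_def frob2[OF ch] by (simp add: power_mult_distrib)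

lemma dot_tw: "dot3 (sqv r) (Cz C z) = dot3 (tw C r) z"
  unfolding dot3_def sqv_def Cz_def tw_def by (simp add: algebra_simps)

lemma det3_frob:
  fixes p q r :: "nat \<Rightarrow> 'a::comm_ring_1"
  assumes ch: "CHAR('a) = 2"
  shows "det3 (sqv p) (sqv q) (sqv r) = (det3 p q r)^2"
  unfolding det3_def sqv_def minus_CHAR_2[OF ch] by (simp add: frob2[OF ch] power_mult_distrib)

lemma tw_e0: "tw C e0 = (\<lambda>j. C 0 j)"
  by (simp add: tw_def e0_def)

lemma dot_e0: "dot3 e0 z = z 0"
  by (simp add: dot3_def e0_def)

lemma T_count:
  fixes C :: "nat \<Rightarrow> nat \<Rightarrow> 'a::alg_closed_field"
  assumes ch: "CHAR('a) = 2"
    and d1: "det3 e0 (\<lambda>j. C 0 j) (tw C (\<lambda>j. C 0 j)) \<noteq> 0"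
    and d2: "det3 (tw C (tw C (\<lambda>j. C 0 j))) (\<lambda>j. C 0 j) (tw C (\<lambda>j. C 0 j)) \<noteq> 0"
  shows "card (Tset C) = 8" "\<And>z. z \<in> Tset C \<Longrightarrow> z 0 = 0 \<Longrightarrow> z = (\<lambda>_. 0)" "(\<lambda>_. 0) \<in> Tset C"
proof -
  define r1 where "r1 = (\<lambda>j. C 0 j)"
  define r2 where "r2 = tw C r1"
  define r3 where "r3 = tw C r2"
  note d1 = d1[folded r1_def, folded r2_def] and d2 = d2[folded r1_def, folded r2_def, folded r3_def]
  obtain a0 a1 a2 where comb: "\<forall>j<3. r3 j = a0 * e0 j + a1 * r1 j + a2 * r2 j"
    using la_combo[OF d1, of r3] by blast
  have a0: "a0 \<noteq> 0" using det3_combo[OF comb] d2 by auto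
  have dot3r3: "dot3 r3 z = a0 * dot3 e0 z + a1 * dot3 r1 z + a2 * dot3 r2 z" for z
    using comb unfolding all_lt3 dot3_def by (simp add: algebra_simps)
  define R where "R = {t. t^8 + a2 * t^4 + a1 * t^2 + a0 * t = 0}"
  have cardR: "card R = 8" unfolding R_def by (rule roots8[OF ch a0])
  have Tz: "z \<in> Tset C \<Longrightarrow> dot3 p (sqv z) = dot3 p (Cz C z)" for z p
    unfolding Tset_def dot3_def sqv_def by (simp add: numeral_eq_Suc)
  have step: "z \<in> Tset C \<Longrightarrow> (dot3 r z)^2 = dot3 (tw C r) z" for z r
    using dot_frob[OF ch, of r z] dot_tw[of r C z] Tz[of z "sqv r"] by simp
  have tw0: "tw C e0 = r1" unfolding r1_def by (rule tw_e0)
  have powers: "z \<in> Tset C \<Longrightarrow> dot3 e0 z = z 0 \<and> dot3 r1 z = (z 0)^2 \<and> dot3 r2 z = (z 0)^4 \<and> dot3 r3 z = (z 0)^8" for z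
  proof -
    assume z: "z \<in> Tset C"
    have 1: "dot3 r1 z = (z 0)^2" using step[OF z, of e0] by (simp add: tw0 dot_e0)
    have 2: "dot3 r2 z = (z 0)^4" using step[OF z, of r1] 1 unfolding r2_def by (simp add: power_mult[symmetric])
    have 3: "dot3 r3 z = (z 0)^8" using step[OF z, of r2] 2 unfolding r3_def by (simp add: power_mult[symmetric])
    show ?thesis using 1 2 3 by (simp add: dot_e0)
  qed
  have inR: "z \<in> Tset C \<Longrightarrow> z 0 \<in> R" for z
  proof -
    assume z: "z \<in> Tset C"
    have pw: "dot3 e0 z = z 0" "dot3 r1 z = (z 0)^2" "dot3 r2 z = (z 0)^4" "dot3 r3 z = (z 0)^8"
      using powers[OF z] by blast+
    have "(z 0)^8 = a0 * dot3 e0 z + a1 * dot3 r1 z + a2 * dot3 r2 z" using dot3r3[of z] pw(4) by simp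
    also have "\<dots> = a0 * z 0 + a1 * (z 0)^2 + a2 * (z 0)^4" by (simp only: pw(1-3))
    finally have "(z 0)^8 = a0 * z 0 + a1 * (z 0)^2 + a2 * (z 0)^4" .
    then have "(z 0)^8 + a2 * (z 0)^4 + a1 * (z 0)^2 + a0 * z 0 = (a0 * z 0 + a0 * z 0) + (a1 * (z 0)^2 + a1 * (z 0)^2) + (a2 * (z 0)^4 + a2 * (z 0)^4)"
      by (simp add: algebra_simps)
    then show ?thesis unfolding R_def by (simp add: c2_add_self[OF ch])
  qed
  have inj: "z \<in> Tset C \<Longrightarrow> z' \<in> Tset C \<Longrightarrow> z 0 = z' 0 \<Longrightarrow> z = z'" for z z'
  proof -
    assume z: "z \<in> Tset C" and z': "z' \<in> Tset C" and e: "z 0 = z' 0"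
    have "z 0 = z' 0 \<and> z 1 = z' 1 \<and> z 2 = z' 2"
      using la_unique[OF d1, of z z'] powers[OF z] powers[OF z'] e by simp
    moreover have "\<forall>i\<ge>3. z i = 0 \<and> z' i = 0" using z z' by (simp add: Tset_def)
    ultimately show "z = z'"
    proof -
      assume a: "z 0 = z' 0 \<and> z 1 = z' 1 \<and> z 2 = z' 2" and b: "\<forall>i\<ge>3. z i = 0 \<and> z' i = 0"
      show "z = z'"
      proof
        fix i show "z i = z' i"
        proof (cases "i < 3")
          case True then have "i = 0 \<or> i = 1 \<or> i = 2" by auto
          then show ?thesis using a by auto
        next
          case False then show ?thesis using b by simp
        qed
      qed
    qed
  qed
  have surj: "t \<in> R \<Longrightarrow> \<exists>z\<in>Tset C. z 0 = t" for t
  proof -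
    assume t: "t \<in> R"
    define z where "z = cram e0 r1 r2 t (t^2) (t^4)"
    have zd: "dot3 e0 z = t" "dot3 r1 z = t^2" "dot3 r2 z = t^4" "\<And>i. i \<ge> 3 \<Longrightarrow> z i = 0"
      unfolding z_def using la_solve[OF d1] by blast+
    have z0: "z 0 = t" using zd(1) by (simp only: dot_e0)
    have t8: "t^8 = a0 * t + a1 * t^2 + a2 * t^4"
    proof -
      have "t^8 + a2 * t^4 + a1 * t^2 + a0 * t = 0" using t by (simp add: R_def)
      then have "t^8 + (a2 * t^4 + a1 * t^2 + a0 * t) = 0" by (simp only: add.assoc)
      then have "t^8 = - (a2 * t^4 + a1 * t^2 + a0 * t)" by (simp only: eq_neg_iff_add_eq_0)
      then have "t^8 = a2 * t^4 + a1 * t^2 + a0 * t" by (simp only: uminus_CHAR_2[OF ch])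
      then show ?thesis by (simp add: algebra_simps)
    qed
    have r3z: "dot3 r3 z = t^8" unfolding dot3r3[of z] zd(1-3) t8 by simp
    have eqs: "dot3 (sqv e0) (sqv z) = dot3 (sqv e0) (Cz C z)"
      "dot3 (sqv r1) (sqv z) = dot3 (sqv r1) (Cz C z)"
      "dot3 (sqv r2) (sqv z) = dot3 (sqv r2) (Cz C z)"
    proof -
      show "dot3 (sqv e0) (sqv z) = dot3 (sqv e0) (Cz C z)"
        unfolding dot_tw dot_frob[OF ch, symmetric] tw0 zd(1) zd(2) ..
      show "dot3 (sqv r1) (sqv z) = dot3 (sqv r1) (Cz C z)"
        unfolding dot_tw dot_frob[OF ch, symmetric] r2_def[symmetric] zd(2) zd(3) by (simp add: power_mult[symmetric])
      show "dot3 (sqv r2) (sqv z) = dot3 (sqv r2) (Cz C z)"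
        unfolding dot_tw dot_frob[OF ch, symmetric] r3_def[symmetric] zd(3) r3z by (simp add: power_mult[symmetric])
    qed
    have dsq: "det3 (sqv e0) (sqv r1) (sqv r2) \<noteq> 0" using det3_frob[OF ch, of e0 r1 r2] d1 by simp
    have "sqv z 0 = Cz C z 0 \<and> sqv z 1 = Cz C z 1 \<and> sqv z 2 = Cz C z 2"
      using la_unique[OF dsq eqs] by simp
    then have "z \<in> Tset C" using zd(4) unfolding Tset_def all_lt3 sqv_def by simp
    then show ?thesis using z0 by blast
  qed
  have bij: "bij_betw (\<lambda>z. z 0) (Tset C) R"
    unfolding bij_betw_def inj_on_def using inj inR surj by blast
  show "card (Tset C) = 8" using bij_betw_same_card[OF bij] cardR by simp
  show zT: "(\<lambda>_. 0) \<in> Tset C" by (simp add: Tset_def Cz_def)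
  show "\<And>z. z \<in> Tset C \<Longrightarrow> z 0 = 0 \<Longrightarrow> z = (\<lambda>_. 0)"
    using inj[OF _ zT] by simp
qed

definition Ar :: "((nat \<Rightarrow> nat) \<Rightarrow> 'a::comm_ring_1) \<Rightarrow> nat \<Rightarrow> nat \<Rightarrow> 'a" where
  "Ar b i j = (if i = 0 then (if j = 0 then cf b 2 1 1 else if j = 1 then cf b 0 3 1 else cf b 0 1 3)
     else if i = 1 then (if j = 0 then cf b 3 0 1 else if j = 1 then cf b 1 2 1 else cf b 1 0 3)
     else (if j = 0 then cf b 3 1 0 else if j = 1 then cf b 1 3 0 else cf b 1 1 2))"

definition cross3 :: "(nat \<Rightarrow> 'a::comm_ring_1) \<Rightarrow> (nat \<Rightarrow> 'a) \<Rightarrow> nat \<Rightarrow> 'a" where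
  "cross3 p q = (\<lambda>j. if j = 0 then p 1 * q 2 - p 2 * q 1 else if j = 1 then p 2 * q 0 - p 0 * q 2 else p 0 * q 1 - p 1 * q 0)"

definition adjm :: "((nat \<Rightarrow> nat) \<Rightarrow> 'a::comm_ring_1) \<Rightarrow> nat \<Rightarrow> nat \<Rightarrow> 'a" where
  "adjm b i = (if i = 0 then cross3 (\<lambda>j. Ar b j 1) (\<lambda>j. Ar b j 2)
     else if i = 1 then cross3 (\<lambda>j. Ar b j 2) (\<lambda>j. Ar b j 0) else cross3 (\<lambda>j. Ar b j 0) (\<lambda>j. Ar b j 1))"

definition dA :: "((nat \<Rightarrow> nat) \<Rightarrow> 'a::comm_ring_1) \<Rightarrow> 'a" where
  "dA b = det3 (Ar b 0) (Ar b 1) (Ar b 2)"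

definition Cm :: "((nat \<Rightarrow> nat) \<Rightarrow> 'a::field) \<Rightarrow> nat \<Rightarrow> nat \<Rightarrow> 'a" where
  "Cm b i j = adjm b i j / dA b"

definition r1p :: "((nat \<Rightarrow> nat) \<Rightarrow> 'a::comm_ring_1) \<Rightarrow> nat \<Rightarrow> 'a" where
  "r1p b = (\<lambda>j. adjm b 0 j)"
definition r2p :: "((nat \<Rightarrow> nat) \<Rightarrow> 'a::comm_ring_1) \<Rightarrow> nat \<Rightarrow> 'a" where
  "r2p b = tw (adjm b) (r1p b)"
definition r3p :: "((nat \<Rightarrow> nat) \<Rightarrow> 'a::comm_ring_1) \<Rightarrow> nat \<Rightarrow> 'a" where
  "r3p b = tw (adjm b) (r2p b)"

definition Qg :: "((nat \<Rightarrow> nat) \<Rightarrow> 'a::comm_ring_1) \<Rightarrow> 'a" where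
  "Qg b = dA b * det3 e0 (r1p b) (r2p b) * det3 (r3p b) (r1p b) (r2p b)"

lemma vv_dot:
  "vv0 b x = dot3 (Ar b 0) (sqv x)" "vv1 b x = dot3 (Ar b 1) (sqv x)" "vv2 b x = dot3 (Ar b 2) (sqv x)"
  by (simp_all add: vv0_def vv1_def vv2_def dot3_def Ar_def sqv_def)

lemma adj_I1:
  fixes b :: "(nat \<Rightarrow> nat) \<Rightarrow> 'a::comm_ring_1"
  assumes "i < 3"
  shows "Cz (adjm b) (\<lambda>j. dot3 (Ar b j) w) i = dA b * w i"
proof -
  have "i = 0 \<or> i = 1 \<or> i = 2" using assms by auto
  then show ?thesis
    by (elim disjE) (simp_all add: Cz_def adjm_def cross3_def dA_def det3_def dot3_def Ar_def algebra_simps)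
qed

lemma adj_I2:
  fixes b :: "(nat \<Rightarrow> nat) \<Rightarrow> 'a::comm_ring_1"
  assumes "i < 3"
  shows "dot3 (Ar b i) (Cz (adjm b) w) = dA b * w i"
proof -
  have "i = 0 \<or> i = 1 \<or> i = 2" using assms by auto
  then show ?thesis
    by (elim disjE) (simp_all add: Cz_def adjm_def cross3_def dA_def det3_def dot3_def Ar_def algebra_simps)
qed

lemma tw_scale: "tw (\<lambda>i j. A i j * s) (\<lambda>j. r j * u) = (\<lambda>j. tw A r j * (u^2 * s))"
  by (simp add: tw_def power_mult_distrib algebra_simps)

lemma det3_scale: "det3 (\<lambda>j. p j * a) (\<lambda>j. q j * c) (\<lambda>j. r j * e) = det3 p q r * (a * c * e)"
  by (simp add: det3_def algebra_simps)

lemma Cm_alt: "Cm b = (\<lambda>i j. adjm b i j * inverse (dA b))"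
  by (simp add: Cm_def fun_eq_iff divide_inverse)

lemma generic_dets:
  fixes b :: "(nat \<Rightarrow> nat) \<Rightarrow> 'a::field"
  assumes Q: "Qg b \<noteq> 0"
  shows "dA b \<noteq> 0"
    "det3 e0 (\<lambda>j. Cm b 0 j) (tw (Cm b) (\<lambda>j. Cm b 0 j)) \<noteq> 0"
    "det3 (tw (Cm b) (tw (Cm b) (\<lambda>j. Cm b 0 j))) (\<lambda>j. Cm b 0 j) (tw (Cm b) (\<lambda>j. Cm b 0 j)) \<noteq> 0"
proof -
  define d where "d = dA b"
  have d: "d \<noteq> 0" and q1: "det3 e0 (r1p b) (r2p b) \<noteq> 0" and q2: "det3 (r3p b) (r1p b) (r2p b) \<noteq> 0"
    using Q by (auto simp: Qg_def d_def)
  show "dA b \<noteq> 0" using d by (simp add: d_def)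
  have c1: "(\<lambda>j. Cm b 0 j) = (\<lambda>j. r1p b j * inverse d)" by (simp add: Cm_alt r1p_def d_def)
  have c2: "tw (Cm b) (\<lambda>j. Cm b 0 j) = (\<lambda>j. r2p b j * (inverse d ^ 2 * inverse d))"
    unfolding c1 unfolding Cm_alt d_def[symmetric] tw_scale r2p_def ..
  have c3: "tw (Cm b) (tw (Cm b) (\<lambda>j. Cm b 0 j)) = (\<lambda>j. r3p b j * ((inverse d ^ 2 * inverse d) ^ 2 * inverse d))"
    unfolding c2 unfolding Cm_alt d_def[symmetric] tw_scale r3p_def ..
  have e0s: "e0 = (\<lambda>j. e0 j * (1::'a))" by simp
  show "det3 e0 (\<lambda>j. Cm b 0 j) (tw (Cm b) (\<lambda>j. Cm b 0 j)) \<noteq> 0"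
    apply (simp only: c2)
    apply (simp only: c1)
    apply (subst e0s, subst det3_scale)
    using d q1 by simp
  show "det3 (tw (Cm b) (tw (Cm b) (\<lambda>j. Cm b 0 j))) (\<lambda>j. Cm b 0 j) (tw (Cm b) (\<lambda>j. Cm b 0 j)) \<noteq> 0"
    apply (simp only: c3)
    apply (simp only: c2)
    apply (simp only: c1)
    apply (subst det3_scale)
    using d q2 by simp
qed

lemma c2_neg_eq:
  fixes p q r s :: "'a::field"
  assumes ch: "CHAR('a) = 2" and e: "p * q + r * s = 0" and r: "r \<noteq> 0"
  shows "s = p * q / r"
proof -
  have "r * s = - (p * q)" using e by (simp add: eq_neg_iff_add_eq_0 add.commute)
  then have "r * s = p * q" by (simp only: uminus_CHAR_2[OF ch])
  then show ?thesis using r by (simp add: field_simps)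
qed

lemma cross_par:
  fixes b :: "(nat \<Rightarrow> nat) \<Rightarrow> 'a::field"
  assumes ch: "CHAR('a) = 2" and G: "Gv b x" and nz: "x 0 \<noteq> 0 \<or> x 1 \<noteq> 0 \<or> x 2 \<noteq> 0"
  shows "\<exists>\<mu>. vv0 b x = \<mu> * x 0 \<and> vv1 b x = \<mu> * x 1 \<and> vv2 b x = \<mu> * x 2"
proof -
  have g1: "x 1 * vv2 b x + x 2 * vv1 b x = 0" and g2: "x 0 * vv2 b x + x 2 * vv0 b x = 0"
    and g3: "x 1 * vv0 b x + x 0 * vv1 b x = 0" using G by (simp_all add: Gv_def)
  consider "x 0 \<noteq> 0" | "x 1 \<noteq> 0" | "x 2 \<noteq> 0" using nz by blast
  then show ?thesis
  proof cases
    case 1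
    have "vv1 b x = x 1 * vv0 b x / x 0" by (rule c2_neg_eq[OF ch g3 1])
    moreover have "vv2 b x = x 2 * vv0 b x / x 0" using c2_neg_eq[OF ch _ 1, of "x 2" "vv0 b x" "vv2 b x"] g2
      by (simp add: add.commute)
    ultimately show ?thesis using 1 by (intro exI[of _ "vv0 b x / x 0"]) simp
  next
    case 2
    have "vv0 b x = x 0 * vv1 b x / x 1" using c2_neg_eq[OF ch _ 2, of "x 0" "vv1 b x" "vv0 b x"] g3
      by (simp add: add.commute)
    moreover have "vv2 b x = x 2 * vv1 b x / x 1" using c2_neg_eq[OF ch _ 2, of "x 2" "vv1 b x" "vv2 b x"] g1
      by (simp add: add.commute)
    ultimately show ?thesis using 2 by (intro exI[of _ "vv1 b x / x 1"]) simp
  next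
    case 3
    have "vv0 b x = x 0 * vv2 b x / x 2" by (rule c2_neg_eq[OF ch g2 3])
    moreover have "vv1 b x = x 1 * vv2 b x / x 2" by (rule c2_neg_eq[OF ch g1 3])
    ultimately show ?thesis using 3 by (intro exI[of _ "vv2 b x / x 2"]) simp
  qed
qed

lemma par_Gv:
  fixes b :: "(nat \<Rightarrow> nat) \<Rightarrow> 'a::field"
  assumes ch: "CHAR('a) = 2" and p: "vv0 b x = \<mu> * x 0" "vv1 b x = \<mu> * x 1" "vv2 b x = \<mu> * x 2"
  shows "Gv b x"
proof -
  have h: "\<And>u w. u * (\<mu> * w) + w * (\<mu> * u) = 0"
  proof -
    fix u w :: 'a
    have "u * (\<mu> * w) + w * (\<mu> * u) = (\<mu> * u * w) + (\<mu> * u * w)" by (simp add: algebra_simps)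
    then show "u * (\<mu> * w) + w * (\<mu> * u) = 0" by (simp add: c2_add_self[OF ch])
  qed
  show ?thesis unfolding Gv_def p by (simp only: h simp_thms)
qed

lemma Cz_Cm: "Cz (Cm b) z i = Cz (adjm b) z i * inverse (dA b)"
  by (simp add: Cz_def Cm_alt algebra_simps)

lemma Cz_cong: "w 0 = w' 0 \<Longrightarrow> w 1 = w' 1 \<Longrightarrow> w 2 = w' 2 \<Longrightarrow> Cz C w i = Cz C w' i"
  by (simp add: Cz_def)

lemma dot3_cong: "w 0 = w' 0 \<Longrightarrow> w 1 = w' 1 \<Longrightarrow> w 2 = w' 2 \<Longrightarrow> dot3 p w = dot3 p w'"
  by (simp add: dot3_def)

lemma toT:
  fixes b :: "(nat \<Rightarrow> nat) \<Rightarrow> 'a::field"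
  assumes d: "dA b \<noteq> 0" and p: "vv0 b x = \<mu> * x 0" "vv1 b x = \<mu> * x 1" "vv2 b x = \<mu> * x 2"
    and mu: "\<mu> \<noteq> 0" and out: "\<forall>i\<ge>3. x i = 0"
  shows "(\<lambda>v. inverse \<mu> * x v) \<in> Tset (Cm b)"
proof -
  define z where "z = (\<lambda>v. inverse \<mu> * x v)"
  have vz: "vv0 b z = z 0" "vv1 b z = z 1" "vv2 b z = z 2"
    unfolding z_def vv_scale p using mu by (simp_all add: power2_eq_square)
  have dz: "(\<lambda>j. dot3 (Ar b j) (sqv z)) 0 = z 0" "(\<lambda>j. dot3 (Ar b j) (sqv z)) 1 = z 1" "(\<lambda>j. dot3 (Ar b j) (sqv z)) 2 = z 2"
    using vz by (simp_all add: vv_dot)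
  have "z i ^ 2 = Cz (Cm b) z i" if i: "i < 3" for i
  proof -
    have "Cz (adjm b) z i = dA b * sqv z i"
      using adj_I1[OF i, of b "sqv z"] Cz_cong[OF dz, of "adjm b" i] by simp
    then show ?thesis using d by (simp add: Cz_Cm sqv_def)
  qed
  moreover have "\<forall>i\<ge>3. z i = 0" using out by (simp add: z_def)
  ultimately show ?thesis unfolding z_def[symmetric] Tset_def by blast
qed

lemma fromT:
  fixes b :: "(nat \<Rightarrow> nat) \<Rightarrow> 'a::field"
  assumes d: "dA b \<noteq> 0" and z: "z \<in> Tset (Cm b)"
  shows "vv0 b z = z 0" "vv1 b z = z 1" "vv2 b z = z 2"
proof -
  have sq: "Cz (adjm b) z j = dA b * sqv z j" if "j < 3" for j
    using z that d by (simp add: Tset_def Cz_Cm sqv_def field_simps)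
  have key: "dA b * dot3 (Ar b i) (sqv z) = dA b * z i" if i: "i < 3" for i
  proof -
    have "dot3 (Ar b i) (Cz (adjm b) z) = dot3 (Ar b i) (\<lambda>j. dA b * sqv z j)"
      by (rule dot3_cong) (simp_all add: sq)
    then show ?thesis using adj_I2[OF i, of b z] by (simp add: dot3_def algebra_simps)
  qed
  show "vv0 b z = z 0" "vv1 b z = z 1" "vv2 b z = z 2"
    using key[of 0] key[of 1] key[of 2] d by (simp_all add: vv_dot)
qed

lemma generic_S1:
  fixes b :: "(nat \<Rightarrow> nat) \<Rightarrow> 'a::alg_closed_field"
  assumes ch: "CHAR('a) = 2" and Q: "Qg b \<noteq> 0"
  shows "\<And>x. x \<in> S1 b \<Longrightarrow> \<exists>\<mu>. \<mu> \<noteq> 0 \<and> vv0 b x = \<mu> * x 0 \<and> vv1 b x = \<mu> * x 1 \<and> vv2 b x = \<mu> * x 2"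
    and "\<And>x. x \<in> S1 b \<Longrightarrow> x 0 \<noteq> 0"
    and "card {x\<in>S1 b. x 0 = 1} = 7"
proof -
  note gd = generic_dets[OF Q]
  have d: "dA b \<noteq> 0" by (rule gd(1))
  note TC = T_count[OF ch gd(2) gd(3)]
  show par: "\<exists>\<mu>. \<mu> \<noteq> 0 \<and> vv0 b x = \<mu> * x 0 \<and> vv1 b x = \<mu> * x 1 \<and> vv2 b x = \<mu> * x 2" if x: "x \<in> S1 b" for x
  proof -
    have G: "Gv b x" and nzv: "x \<in> nzvec {..<3}" using x by (auto simp: S1_def)
    have nz: "x 0 \<noteq> 0 \<or> x 1 \<noteq> 0 \<or> x 2 \<noteq> 0"
    proof -
      obtain v where "v \<in> {..<3}" "x v \<noteq> 0" using nzv by (auto simp: nzvec_def)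
      then have "v = 0 \<or> v = 1 \<or> v = 2" by auto
      then show ?thesis using \<open>x v \<noteq> 0\<close> by auto
    qed
    obtain \<mu> where m: "vv0 b x = \<mu> * x 0" "vv1 b x = \<mu> * x 1" "vv2 b x = \<mu> * x 2"
      using cross_par[OF ch G nz] by blast
    have "\<mu> \<noteq> 0"
    proof
      assume m0: "\<mu> = 0"
      have "dA b * sqv x i = 0" if i: "i < 3" for i
      proof -
        have "Cz (adjm b) (\<lambda>j. dot3 (Ar b j) (sqv x)) i = Cz (adjm b) (\<lambda>_. 0) i"
          by (rule Cz_cong) (use m m0 in \<open>simp_all add: vv_dot\<close>)
        then show ?thesis using adj_I1[OF i, of b "sqv x"] by (simp add: Cz_def)
      qed
      then have "x 0 = 0" "x 1 = 0" "x 2 = 0" using d by (auto simp: sqv_def)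
      then show False using nz by simp
    qed
    then show ?thesis using m by blast
  qed
  show x0: "x 0 \<noteq> 0" if x: "x \<in> S1 b" for x
  proof
    assume x0: "x 0 = 0"
    obtain \<mu> where m: "\<mu> \<noteq> 0" "vv0 b x = \<mu> * x 0" "vv1 b x = \<mu> * x 1" "vv2 b x = \<mu> * x 2"
      using par[OF x] by blast
    have out: "\<forall>i\<ge>3. x i = 0" using x by (auto simp: S1_def nzvec_def)
    have zT: "(\<lambda>v. inverse \<mu> * x v) \<in> Tset (Cm b)" by (rule toT[OF d m(2-4) m(1) out])
    have "(\<lambda>v. inverse \<mu> * x v) = (\<lambda>_. 0)" using TC(2)[OF zT] x0 by simp
    then have "\<forall>v. x v = 0" using m(1) by (simp add: fun_eq_iff)
    then show False using x by (auto simp: S1_def nzvec_def)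
  qed
  define N1 where "N1 = {x\<in>S1 b. x 0 = 1}"
  define T0 where "T0 = Tset (Cm b) - {\<lambda>_. 0}"
  have finT: "finite (Tset (Cm b))" using TC(1) by (intro card_ge_0_finite) simp
  have cT0: "card T0 = 7" unfolding T0_def using TC(1) TC(3) finT by (simp add: card_Diff_singleton)
  define f where "f = (\<lambda>x::nat \<Rightarrow> 'a. \<lambda>v. inverse (vv0 b x) * x v)"
  define g where "g = (\<lambda>z::nat \<Rightarrow> 'a. \<lambda>v. inverse (z 0) * z v)"
  have bij: "bij_betw f N1 T0"
  proof (rule bij_betw_byWitness[where f' = g])
    show "\<forall>x\<in>N1. g (f x) = x"
    proof
      fix x assume x: "x \<in> N1"
      obtain \<mu> where m: "\<mu> \<noteq> 0" "vv0 b x = \<mu> * x 0" using par[of x] x by (auto simp: N1_def)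
      have "vv0 b x \<noteq> 0" using m x by (simp add: N1_def)
      then show "g (f x) = x" using x by (simp add: f_def g_def N1_def fun_eq_iff)
    qed
    show "\<forall>z\<in>T0. f (g z) = z"
    proof
      fix z assume z: "z \<in> T0"
      have zT: "z \<in> Tset (Cm b)" and zn: "z \<noteq> (\<lambda>_. 0)" using z by (auto simp: T0_def)
      have z0: "z 0 \<noteq> 0" using TC(2)[OF zT] zn by blast
      have "vv0 b (g z) = inverse (z 0) ^ 2 * z 0" unfolding g_def vv_scale fromT[OF d zT] ..
      then have "vv0 b (g z) = inverse (z 0)" using z0 by (simp add: power2_eq_square)
      then show "f (g z) = z" using z0 by (simp add: f_def g_def fun_eq_iff)
    qed
    show "f ` N1 \<subseteq> T0"
    proof
      fix y assume "y \<in> f ` N1"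
      then obtain x where x: "x \<in> N1" "y = f x" by blast
      obtain \<mu> where m: "\<mu> \<noteq> 0" "vv0 b x = \<mu> * x 0" "vv1 b x = \<mu> * x 1" "vv2 b x = \<mu> * x 2"
        using par[of x] x by (auto simp: N1_def)
      have x1: "x 0 = 1" using x by (simp add: N1_def)
      have out: "\<forall>i\<ge>3. x i = 0" using x by (auto simp: N1_def S1_def nzvec_def)
      have mu: "\<mu> = vv0 b x" using m x1 by simp
      have "(\<lambda>v. inverse \<mu> * x v) \<in> Tset (Cm b)" by (rule toT[OF d m(2-4) m(1) out])
      moreover have "(\<lambda>v. inverse \<mu> * x v) \<noteq> (\<lambda>_. 0)"
      proof
        assume "(\<lambda>v. inverse \<mu> * x v) = (\<lambda>_. 0)"
        then have "inverse \<mu> * x 0 = 0" by (metis)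
        then show False using m(1) x1 by simp
      qed
      ultimately show "y \<in> T0" unfolding T0_def x(2) f_def mu by blast
    qed
    show "g ` T0 \<subseteq> N1"
    proof
      fix y assume "y \<in> g ` T0"
      then obtain z where z: "z \<in> T0" "y = g z" by blast
      have zT: "z \<in> Tset (Cm b)" and zn: "z \<noteq> (\<lambda>_. 0)" using z by (auto simp: T0_def)
      have z0: "z 0 \<noteq> 0" using TC(2)[OF zT] zn by blast
      have vz: "vv0 b z = z 0" "vv1 b z = z 1" "vv2 b z = z 2" using fromT[OF d zT] by blast+
      have p: "vv0 b (g z) = inverse (z 0) * g z 0" "vv1 b (g z) = inverse (z 0) * g z 1"
          "vv2 b (g z) = inverse (z 0) * g z 2"
        unfolding g_def vv_scale vz by (simp_all add: power2_eq_square)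
      have G: "Gv b (g z)" by (rule par_Gv[OF ch p])
      have g0: "g z 0 = 1" using z0 by (simp add: g_def)
      have out: "\<forall>v. v \<notin> {..<3} \<longrightarrow> g z v = 0" using zT by (simp add: g_def Tset_def)
      have "g z \<in> nzvec {..<3}" using out g0 unfolding nzvec_def by force
      then show "y \<in> N1" using G g0 z(2) by (simp add: N1_def S1_def)
    qed
  qed
  show "card {x\<in>S1 b. x 0 = 1} = 7" using bij_betw_same_card[OF bij] cT0 by (simp add: N1_def)
qed

lemma hasse_cong: "(\<forall>v\<in>V. \<alpha> v = \<beta> v) \<Longrightarrow> hasse V d c \<alpha> x = hasse V d c \<beta> x"
  unfolding hasse_def by (intro sum.cong refl prod.cong) auto

definition HD :: "((nat \<Rightarrow> nat) \<Rightarrow> 'a::comm_ring_1) \<Rightarrow> nat \<Rightarrow> (nat \<Rightarrow> 'a) \<Rightarrow> 'a" where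
  "HD b k x = hasse {..<3} 4 b (\<lambda>v. if v = k then 2 else 0) x"

lemma HD_rule:
  "\<alpha> 0 = 2 \<Longrightarrow> \<alpha> 1 = 0 \<Longrightarrow> \<alpha> 2 = 0 \<Longrightarrow> hasse {..<3} 4 b \<alpha> x = HD b 0 x"
  "\<alpha> 0 = 0 \<Longrightarrow> \<alpha> 1 = 2 \<Longrightarrow> \<alpha> 2 = 0 \<Longrightarrow> hasse {..<3} 4 b \<alpha> x = HD b 1 x"
  "\<alpha> 0 = 0 \<Longrightarrow> \<alpha> 1 = 0 \<Longrightarrow> \<alpha> 2 = 2 \<Longrightarrow> hasse {..<3} 4 b \<alpha> x = HD b 2 x"
  unfolding HD_def by (rule hasse_cong, simp add: lt3)+

lemma euler_HD:
  fixes b :: "(nat \<Rightarrow> nat) \<Rightarrow> 'a::comm_ring_1"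
  assumes c: "CHAR('a) = 2"
  shows "HD b 0 x * x 0 ^ 2 + HD b 1 x * x 1 ^ 2 + HD b 2 x * x 2 ^ 2
     + vv2 b x * x 0 * x 1 + vv1 b x * x 0 * x 2 + vv0 b x * x 1 * x 2 = 0"
  unfolding HD_def by (rule hasse_euler[OF c]) simp_all

lemma hasse_sum: "hasse V d c \<alpha> x = (\<Sum>m\<in>mons V d. c m * (\<Prod>v\<in>V. of_nat (m v choose \<alpha> v) * x v ^ (m v - \<alpha> v)))"
  by (rule hasse_def)

lemma bin42: "(4::nat) choose 2 = 6"
  by (simp add: numeral_eq_Suc)

lemma D0: "{..<4::nat} - {0} = {1,2,3}" by auto
lemma D1: "{..<4::nat} - {1} = {0,2,3}" by auto
lemma D2: "{..<4::nat} - {2} = {0,1,3}" by auto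
lemma D3: "{..<4::nat} - {3} = {0,1,2}" by auto

lemma chart0_heval:
  fixes b :: "(nat \<Rightarrow> nat) \<Rightarrow> 'a::field"
  assumes c: "CHAR('a) = 2"
  shows "heval ({..<4} - {0}) 2 (\<lambda>\<alpha>. hasse {..<4} 4 (Xcoef b) \<alpha> y) u = (y 0 ^ 2 + HD b 0 (\<lambda>i. y (Suc i))) * u 1 ^ 2 + HD b 1 (\<lambda>i. y (Suc i)) * u 2 ^ 2 + HD b 2 (\<lambda>i. y (Suc i)) * u 3 ^ 2 + vv2 b (\<lambda>i. y (Suc i)) * u 1 * u 2 + vv1 b (\<lambda>i. y (Suc i)) * u 1 * u 3 + vv0 b (\<lambda>i. y (Suc i)) * u 2 * u 3"
  unfolding heval_def D0
  apply (simp only: hasse_X)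
  apply (simp add: sum_mons_insert sum_mons_empty atMost_expand numeral_2_eq_2)
  apply (simp add: hmon_def e4_def e22_def lt4 HD_rule hess01[OF c] hess02[OF c] hess12[OF c] c2_bit0[OF c] c2_bit1[OF c])
  apply (simp add: algebra_simps power2_eq_square c2_bit0[OF c] c2_bit1[OF c] numeral_2_eq_2[symmetric] bin42)?
  done

lemma chart0_hpd1:
  fixes b :: "(nat \<Rightarrow> nat) \<Rightarrow> 'a::field"
  assumes c: "CHAR('a) = 2"
  shows "hpd ({..<4} - {0}) 2 (\<lambda>\<alpha>. hasse {..<4} 4 (Xcoef b) \<alpha> y) 1 u = vv2 b (\<lambda>i. y (Suc i)) * u 2 + vv1 b (\<lambda>i. y (Suc i)) * u 3"
  unfolding hpd_def D0 hasse_sum[of "{1,2,3}::nat set"]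
  apply (simp only: hasse_X)
  apply (simp add: sum_mons_insert sum_mons_empty atMost_expand numeral_2_eq_2)
  apply (simp add: hmon_def e4_def e22_def lt4 HD_rule hess01[OF c] hess02[OF c] hess12[OF c] c2_bit0[OF c] c2_bit1[OF c])
  apply (simp add: algebra_simps power2_eq_square c2_bit0[OF c] c2_bit1[OF c] numeral_2_eq_2[symmetric] bin42)?
  done

lemma chart0_hpd2:
  fixes b :: "(nat \<Rightarrow> nat) \<Rightarrow> 'a::field"
  assumes c: "CHAR('a) = 2"
  shows "hpd ({..<4} - {0}) 2 (\<lambda>\<alpha>. hasse {..<4} 4 (Xcoef b) \<alpha> y) 2 u = vv2 b (\<lambda>i. y (Suc i)) * u 1 + vv0 b (\<lambda>i. y (Suc i)) * u 3"
  unfolding hpd_def D0 hasse_sum[of "{1,2,3}::nat set"]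
  apply (simp only: hasse_X)
  apply (simp add: sum_mons_insert sum_mons_empty atMost_expand numeral_2_eq_2)
  apply (simp add: hmon_def e4_def e22_def lt4 HD_rule hess01[OF c] hess02[OF c] hess12[OF c] c2_bit0[OF c] c2_bit1[OF c])
  apply (simp add: algebra_simps power2_eq_square c2_bit0[OF c] c2_bit1[OF c] numeral_2_eq_2[symmetric] bin42)?
  done

lemma chart0_hpd3:
  fixes b :: "(nat \<Rightarrow> nat) \<Rightarrow> 'a::field"
  assumes c: "CHAR('a) = 2"
  shows "hpd ({..<4} - {0}) 2 (\<lambda>\<alpha>. hasse {..<4} 4 (Xcoef b) \<alpha> y) 3 u = vv1 b (\<lambda>i. y (Suc i)) * u 1 + vv0 b (\<lambda>i. y (Suc i)) * u 2"
  unfolding hpd_def D0 hasse_sum[of "{1,2,3}::nat set"]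
  apply (simp only: hasse_X)
  apply (simp add: sum_mons_insert sum_mons_empty atMost_expand numeral_2_eq_2)
  apply (simp add: hmon_def e4_def e22_def lt4 HD_rule hess01[OF c] hess02[OF c] hess12[OF c] c2_bit0[OF c] c2_bit1[OF c])
  apply (simp add: algebra_simps power2_eq_square c2_bit0[OF c] c2_bit1[OF c] numeral_2_eq_2[symmetric] bin42)?
  done

lemma chart1_heval:
  fixes b :: "(nat \<Rightarrow> nat) \<Rightarrow> 'a::field"
  assumes c: "CHAR('a) = 2"
  shows "heval ({..<4} - {1}) 2 (\<lambda>\<alpha>. hasse {..<4} 4 (Xcoef b) \<alpha> y) u = y 1 ^ 2 * u 0 ^ 2 + HD b 1 (\<lambda>i. y (Suc i)) * u 2 ^ 2 + HD b 2 (\<lambda>i. y (Suc i)) * u 3 ^ 2 + vv0 b (\<lambda>i. y (Suc i)) * u 2 * u 3"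
  unfolding heval_def D1
  apply (simp only: hasse_X)
  apply (simp add: sum_mons_insert sum_mons_empty atMost_expand numeral_2_eq_2)
  apply (simp add: hmon_def e4_def e22_def lt4 HD_rule hess01[OF c] hess02[OF c] hess12[OF c] c2_bit0[OF c] c2_bit1[OF c])
  apply (simp add: algebra_simps power2_eq_square c2_bit0[OF c] c2_bit1[OF c] numeral_2_eq_2[symmetric] bin42)?
  done

lemma chart1_hpd0:
  fixes b :: "(nat \<Rightarrow> nat) \<Rightarrow> 'a::field"
  assumes c: "CHAR('a) = 2"
  shows "hpd ({..<4} - {1}) 2 (\<lambda>\<alpha>. hasse {..<4} 4 (Xcoef b) \<alpha> y) 0 u = 0"
  unfolding hpd_def D1 hasse_sum[of "{0,2,3}::nat set"]
  apply (simp only: hasse_X)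
  apply (simp add: sum_mons_insert sum_mons_empty atMost_expand numeral_2_eq_2)
  apply (simp add: hmon_def e4_def e22_def lt4 HD_rule hess01[OF c] hess02[OF c] hess12[OF c] c2_bit0[OF c] c2_bit1[OF c])
  apply (simp add: algebra_simps power2_eq_square c2_bit0[OF c] c2_bit1[OF c] numeral_2_eq_2[symmetric] bin42)?
  done

lemma chart1_hpd2:
  fixes b :: "(nat \<Rightarrow> nat) \<Rightarrow> 'a::field"
  assumes c: "CHAR('a) = 2"
  shows "hpd ({..<4} - {1}) 2 (\<lambda>\<alpha>. hasse {..<4} 4 (Xcoef b) \<alpha> y) 2 u = vv0 b (\<lambda>i. y (Suc i)) * u 3"
  unfolding hpd_def D1 hasse_sum[of "{0,2,3}::nat set"]
  apply (simp only: hasse_X)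
  apply (simp add: sum_mons_insert sum_mons_empty atMost_expand numeral_2_eq_2)
  apply (simp add: hmon_def e4_def e22_def lt4 HD_rule hess01[OF c] hess02[OF c] hess12[OF c] c2_bit0[OF c] c2_bit1[OF c])
  apply (simp add: algebra_simps power2_eq_square c2_bit0[OF c] c2_bit1[OF c] numeral_2_eq_2[symmetric] bin42)?
  done

lemma chart1_hpd3:
  fixes b :: "(nat \<Rightarrow> nat) \<Rightarrow> 'a::field"
  assumes c: "CHAR('a) = 2"
  shows "hpd ({..<4} - {1}) 2 (\<lambda>\<alpha>. hasse {..<4} 4 (Xcoef b) \<alpha> y) 3 u = vv0 b (\<lambda>i. y (Suc i)) * u 2"
  unfolding hpd_def D1 hasse_sum[of "{0,2,3}::nat set"]
  apply (simp only: hasse_X)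
  apply (simp add: sum_mons_insert sum_mons_empty atMost_expand numeral_2_eq_2)
  apply (simp add: hmon_def e4_def e22_def lt4 HD_rule hess01[OF c] hess02[OF c] hess12[OF c] c2_bit0[OF c] c2_bit1[OF c])
  apply (simp add: algebra_simps power2_eq_square c2_bit0[OF c] c2_bit1[OF c] numeral_2_eq_2[symmetric] bin42)?
  done

lemma chart2_heval:
  fixes b :: "(nat \<Rightarrow> nat) \<Rightarrow> 'a::field"
  assumes c: "CHAR('a) = 2"
  shows "heval ({..<4} - {2}) 2 (\<lambda>\<alpha>. hasse {..<4} 4 (Xcoef b) \<alpha> y) u = y 1 ^ 2 * u 0 ^ 2 + (y 0 ^ 2 + HD b 0 (\<lambda>i. y (Suc i))) * u 1 ^ 2 + HD b 2 (\<lambda>i. y (Suc i)) * u 3 ^ 2 + vv1 b (\<lambda>i. y (Suc i)) * u 1 * u 3"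
  unfolding heval_def D2
  apply (simp only: hasse_X)
  apply (simp add: sum_mons_insert sum_mons_empty atMost_expand numeral_2_eq_2)
  apply (simp add: hmon_def e4_def e22_def lt4 HD_rule hess01[OF c] hess02[OF c] hess12[OF c] c2_bit0[OF c] c2_bit1[OF c])
  apply (simp add: algebra_simps power2_eq_square c2_bit0[OF c] c2_bit1[OF c] numeral_2_eq_2[symmetric] bin42)?
  done

lemma chart2_hpd0:
  fixes b :: "(nat \<Rightarrow> nat) \<Rightarrow> 'a::field"
  assumes c: "CHAR('a) = 2"
  shows "hpd ({..<4} - {2}) 2 (\<lambda>\<alpha>. hasse {..<4} 4 (Xcoef b) \<alpha> y) 0 u = 0"
  unfolding hpd_def D2 hasse_sum[of "{0,1,3}::nat set"]
  apply (simp only: hasse_X)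
  apply (simp add: sum_mons_insert sum_mons_empty atMost_expand numeral_2_eq_2)
  apply (simp add: hmon_def e4_def e22_def lt4 HD_rule hess01[OF c] hess02[OF c] hess12[OF c] c2_bit0[OF c] c2_bit1[OF c])
  apply (simp add: algebra_simps power2_eq_square c2_bit0[OF c] c2_bit1[OF c] numeral_2_eq_2[symmetric] bin42)?
  done

lemma chart2_hpd1:
  fixes b :: "(nat \<Rightarrow> nat) \<Rightarrow> 'a::field"
  assumes c: "CHAR('a) = 2"
  shows "hpd ({..<4} - {2}) 2 (\<lambda>\<alpha>. hasse {..<4} 4 (Xcoef b) \<alpha> y) 1 u = vv1 b (\<lambda>i. y (Suc i)) * u 3"
  unfolding hpd_def D2 hasse_sum[of "{0,1,3}::nat set"]
  apply (simp only: hasse_X)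
  apply (simp add: sum_mons_insert sum_mons_empty atMost_expand numeral_2_eq_2)
  apply (simp add: hmon_def e4_def e22_def lt4 HD_rule hess01[OF c] hess02[OF c] hess12[OF c] c2_bit0[OF c] c2_bit1[OF c])
  apply (simp add: algebra_simps power2_eq_square c2_bit0[OF c] c2_bit1[OF c] numeral_2_eq_2[symmetric] bin42)?
  done

lemma chart2_hpd3:
  fixes b :: "(nat \<Rightarrow> nat) \<Rightarrow> 'a::field"
  assumes c: "CHAR('a) = 2"
  shows "hpd ({..<4} - {2}) 2 (\<lambda>\<alpha>. hasse {..<4} 4 (Xcoef b) \<alpha> y) 3 u = vv1 b (\<lambda>i. y (Suc i)) * u 1"
  unfolding hpd_def D2 hasse_sum[of "{0,1,3}::nat set"]
  apply (simp only: hasse_X)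
  apply (simp add: sum_mons_insert sum_mons_empty atMost_expand numeral_2_eq_2)
  apply (simp add: hmon_def e4_def e22_def lt4 HD_rule hess01[OF c] hess02[OF c] hess12[OF c] c2_bit0[OF c] c2_bit1[OF c])
  apply (simp add: algebra_simps power2_eq_square c2_bit0[OF c] c2_bit1[OF c] numeral_2_eq_2[symmetric] bin42)?
  done

lemma chart3_heval:
  fixes b :: "(nat \<Rightarrow> nat) \<Rightarrow> 'a::field"
  assumes c: "CHAR('a) = 2"
  shows "heval ({..<4} - {3}) 2 (\<lambda>\<alpha>. hasse {..<4} 4 (Xcoef b) \<alpha> y) u = y 1 ^ 2 * u 0 ^ 2 + (y 0 ^ 2 + HD b 0 (\<lambda>i. y (Suc i))) * u 1 ^ 2 + HD b 1 (\<lambda>i. y (Suc i)) * u 2 ^ 2 + vv2 b (\<lambda>i. y (Suc i)) * u 1 * u 2"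
  unfolding heval_def D3
  apply (simp only: hasse_X)
  apply (simp add: sum_mons_insert sum_mons_empty atMost_expand numeral_2_eq_2)
  apply (simp add: hmon_def e4_def e22_def lt4 HD_rule hess01[OF c] hess02[OF c] hess12[OF c] c2_bit0[OF c] c2_bit1[OF c])
  apply (simp add: algebra_simps power2_eq_square c2_bit0[OF c] c2_bit1[OF c] numeral_2_eq_2[symmetric] bin42)?
  done

lemma chart3_hpd0:
  fixes b :: "(nat \<Rightarrow> nat) \<Rightarrow> 'a::field"
  assumes c: "CHAR('a) = 2"
  shows "hpd ({..<4} - {3}) 2 (\<lambda>\<alpha>. hasse {..<4} 4 (Xcoef b) \<alpha> y) 0 u = 0"
  unfolding hpd_def D3 hasse_sum[of "{0,1,2}::nat set"]
  apply (simp only: hasse_X)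
  apply (simp add: sum_mons_insert sum_mons_empty atMost_expand numeral_2_eq_2)
  apply (simp add: hmon_def e4_def e22_def lt4 HD_rule hess01[OF c] hess02[OF c] hess12[OF c] c2_bit0[OF c] c2_bit1[OF c])
  apply (simp add: algebra_simps power2_eq_square c2_bit0[OF c] c2_bit1[OF c] numeral_2_eq_2[symmetric] bin42)?
  done

lemma chart3_hpd1:
  fixes b :: "(nat \<Rightarrow> nat) \<Rightarrow> 'a::field"
  assumes c: "CHAR('a) = 2"
  shows "hpd ({..<4} - {3}) 2 (\<lambda>\<alpha>. hasse {..<4} 4 (Xcoef b) \<alpha> y) 1 u = vv2 b (\<lambda>i. y (Suc i)) * u 2"
  unfolding hpd_def D3 hasse_sum[of "{0,1,2}::nat set"]
  apply (simp only: hasse_X)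
  apply (simp add: sum_mons_insert sum_mons_empty atMost_expand numeral_2_eq_2)
  apply (simp add: hmon_def e4_def e22_def lt4 HD_rule hess01[OF c] hess02[OF c] hess12[OF c] c2_bit0[OF c] c2_bit1[OF c])
  apply (simp add: algebra_simps power2_eq_square c2_bit0[OF c] c2_bit1[OF c] numeral_2_eq_2[symmetric] bin42)?
  done

lemma chart3_hpd2:
  fixes b :: "(nat \<Rightarrow> nat) \<Rightarrow> 'a::field"
  assumes c: "CHAR('a) = 2"
  shows "hpd ({..<4} - {3}) 2 (\<lambda>\<alpha>. hasse {..<4} 4 (Xcoef b) \<alpha> y) 2 u = vv2 b (\<lambda>i. y (Suc i)) * u 1"
  unfolding hpd_def D3 hasse_sum[of "{0,1,2}::nat set"]
  apply (simp only: hasse_X)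
  apply (simp add: sum_mons_insert sum_mons_empty atMost_expand numeral_2_eq_2)
  apply (simp add: hmon_def e4_def e22_def lt4 HD_rule hess01[OF c] hess02[OF c] hess12[OF c] c2_bit0[OF c] c2_bit1[OF c])
  apply (simp add: algebra_simps power2_eq_square c2_bit0[OF c] c2_bit1[OF c] numeral_2_eq_2[symmetric] bin42)?
  done

lemma node_generic:
  fixes b :: "(nat \<Rightarrow> nat) \<Rightarrow> 'a::alg_closed_field"
  assumes ch: "CHAR('a) = 2" and Q: "Qg b \<noteq> 0" and P: "P \<in> Sing {..<4} 4 (Xcoef b)"
  shows "is_node {..<4} 4 (Xcoef b) P"
  unfolding is_node_def
proof (intro conjI P ballI impI)
  fix v0 y assume v0: "v0 \<in> {..<4::nat}" and yP: "y \<in> P" and y1: "y v0 = 1"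
  obtain y' where y': "is_sing_vec {..<4} 4 (Xcoef b) y'" "P = proj_class {..<4} y'"
    using P by (auto simp: Sing_def)
  have out': "\<forall>v. v \<notin> {..<4} \<longrightarrow> y' v = 0" using y'(1) by (auto simp: is_sing_vec_def nzvec_def)
  obtain c where c: "c \<noteq> 0" "y = (\<lambda>v. c * y' v)" using pc_D[of y "{..<4}" y'] yP y'(2) out' by blast
  have ys: "is_sing_vec {..<4} 4 (Xcoef b) y" unfolding c(2) by (rule sing_cone[OF ch y'(1) c(1)])
  define Y where "Y = (\<lambda>i. y (Suc i))"
  have YS: "Y \<in> S1 b" unfolding Y_def by (rule sing_S1[OF ch ys])
  have Y0: "Y 0 \<noteq> 0" by (rule generic_S1(2)[OF ch Q YS])
  obtain \<mu> where mu: "\<mu> \<noteq> 0" "vv0 b Y = \<mu> * Y 0" "vv1 b Y = \<mu> * Y 1" "vv2 b Y = \<mu> * Y 2"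
    using generic_S1(1)[OF ch Q YS] by blast
  have eul: "HD b 0 Y * Y 0 ^ 2 + HD b 1 Y * Y 1 ^ 2 + HD b 2 Y * Y 2 ^ 2
     + vv2 b Y * Y 0 * Y 1 + vv1 b Y * Y 0 * Y 2 + vv0 b Y * Y 1 * Y 2 = 0" by (rule euler_HD[OF ch])
  have Yv: "Y 0 = y 1" "Y 1 = y 2" "Y 2 = y 3" by (simp_all add: Y_def numeral_eq_Suc)
  have c2n: "\<And>p q r s :: 'a. p * q + r * s = 0 \<Longrightarrow> r \<noteq> 0 \<Longrightarrow> s = p * q / r" by (rule c2_neg_eq[OF ch])
  show "smooth_hyp ({..<4} - {v0}) 2 (\<lambda>\<alpha>. hasse {..<4} 4 (Xcoef b) \<alpha> y)"
    unfolding smooth_hyp_def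
  proof
    assume "\<exists>u. is_sing_vec ({..<4} - {v0}) 2 (\<lambda>\<alpha>. hasse {..<4} 4 (Xcoef b) \<alpha> y) u"
    then obtain u where u: "u \<in> nzvec ({..<4} - {v0})"
      "heval ({..<4} - {v0}) 2 (\<lambda>\<alpha>. hasse {..<4} 4 (Xcoef b) \<alpha> y) u = 0"
      "\<forall>j\<in>{..<4} - {v0}. hpd ({..<4} - {v0}) 2 (\<lambda>\<alpha>. hasse {..<4} 4 (Xcoef b) \<alpha> y) j u = 0"
      unfolding is_sing_vec_def by blast
    obtain j where j: "j \<in> {..<4} - {v0}" "u j \<noteq> 0" using u(1) by (auto simp: nzvec_def)
    have "v0 = 0 \<or> v0 = 1 \<or> v0 = 2 \<or> v0 = 3" using v0 by auto
    then show False
    proof (elim disjE)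
      assume v: "v0 = 0"
      have h1: "vv2 b Y * u 2 + vv1 b Y * u 3 = 0" using u(3) chart0_hpd1[OF ch, of b y u] v by (simp add: Y_def)
      have h2: "vv2 b Y * u 1 + vv0 b Y * u 3 = 0" using u(3) chart0_hpd2[OF ch, of b y u] v by (simp add: Y_def)
      have h3: "vv1 b Y * u 1 + vv0 b Y * u 2 = 0" using u(3) chart0_hpd3[OF ch, of b y u] v by (simp add: Y_def)
      have hv: "(y 0 ^ 2 + HD b 0 Y) * u 1 ^ 2 + HD b 1 Y * u 2 ^ 2 + HD b 2 Y * u 3 ^ 2 + vv2 b Y * u 1 * u 2
          + vv1 b Y * u 1 * u 3 + vv0 b Y * u 2 * u 3 = 0" using u(2) chart0_heval[OF ch, of b y u] v by (simp add: Y_def)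
      define \<nu> where "\<nu> = u 1 / Y 0"
      have e3: "\<mu> * (Y 1 * u 1 + Y 0 * u 2) = 0" using h3 mu by (simp add: algebra_simps)
      have e2: "\<mu> * (Y 2 * u 1 + Y 0 * u 3) = 0" using h2 mu by (simp add: algebra_simps)
      have u1: "u 1 = \<nu> * Y 0" using Y0 by (simp add: \<nu>_def)
      have u2: "u 2 = \<nu> * Y 1" using c2n[of "Y 1" "u 1" "Y 0" "u 2"] e3 mu(1) Y0 by (simp add: \<nu>_def)
      have u3: "u 3 = \<nu> * Y 2" using c2n[of "Y 2" "u 1" "Y 0" "u 3"] e2 mu(1) Y0 by (simp add: \<nu>_def)
      have "\<nu>^2 * (y 0 ^ 2 * Y 0 ^ 2 + (HD b 0 Y * Y 0 ^ 2 + HD b 1 Y * Y 1 ^ 2 + HD b 2 Y * Y 2 ^ 2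
     + vv2 b Y * Y 0 * Y 1 + vv1 b Y * Y 0 * Y 2 + vv0 b Y * Y 1 * Y 2)) = 0"
        using hv unfolding u1 u2 u3 by (simp add: power2_eq_square algebra_simps)
      then have "\<nu>^2 * (y 0 ^ 2 * Y 0 ^ 2) = 0" using eul by simp
      then have "\<nu> = 0" using Y0 y1 v by simp
      then have z: "u 1 = 0" "u 2 = 0" "u 3 = 0" using u1 u2 u3 by simp_all
      have "j = 1 \<or> j = 2 \<or> j = 3" using j v by auto
      then show False using z j by auto
    next
      assume v: "v0 = 1"
      have vz: "vv0 b Y \<noteq> 0" using mu Y0 by simp
      have h2: "vv0 b Y * u 3 = 0" using u(3) chart1_hpd2[OF ch, of b y u] v by (simp add: Y_def)
      have h3: "vv0 b Y * u 2 = 0" using u(3) chart1_hpd3[OF ch, of b y u] v by (simp add: Y_def)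
      have hv: "y 1 ^ 2 * u 0 ^ 2 + HD b 1 Y * u 2 ^ 2 + HD b 2 Y * u 3 ^ 2 + vv0 b Y * u 2 * u 3 = 0"
        using u(2) chart1_heval[OF ch, of b y u] v by (simp add: Y_def)
      have "u 2 = 0" "u 3 = 0" using h2 h3 vz by simp_all
      then have "u 0 = 0" using hv Y0 Yv by simp
      moreover have "j = 0 \<or> j = 2 \<or> j = 3" using j v by auto
      ultimately show False using j \<open>u 2 = 0\<close> \<open>u 3 = 0\<close> by auto
    next
      assume v: "v0 = 2"
      have vz: "vv1 b Y \<noteq> 0" using mu Yv y1 v by simp
      have h1: "vv1 b Y * u 3 = 0" using u(3) chart2_hpd1[OF ch, of b y u] v by (simp add: Y_def)
      have h3: "vv1 b Y * u 1 = 0" using u(3) chart2_hpd3[OF ch, of b y u] v by (simp add: Y_def)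
      have hv: "y 1 ^ 2 * u 0 ^ 2 + (y 0 ^ 2 + HD b 0 Y) * u 1 ^ 2 + HD b 2 Y * u 3 ^ 2 + vv1 b Y * u 1 * u 3 = 0"
        using u(2) chart2_heval[OF ch, of b y u] v by (simp add: Y_def)
      have "u 1 = 0" "u 3 = 0" using h1 h3 vz by simp_all
      then have "u 0 = 0" using hv Y0 Yv by simp
      moreover have "j = 0 \<or> j = 1 \<or> j = 3" using j v by auto
      ultimately show False using j \<open>u 1 = 0\<close> \<open>u 3 = 0\<close> by auto
    next
      assume v: "v0 = 3"
      have vz: "vv2 b Y \<noteq> 0" using mu Yv y1 v by simp
      have h1: "vv2 b Y * u 2 = 0" using u(3) chart3_hpd1[OF ch, of b y u] v by (simp add: Y_def)
      have h2: "vv2 b Y * u 1 = 0" using u(3) chart3_hpd2[OF ch, of b y u] v by (simp add: Y_def)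
      have hv: "y 1 ^ 2 * u 0 ^ 2 + (y 0 ^ 2 + HD b 0 Y) * u 1 ^ 2 + HD b 1 Y * u 2 ^ 2 + vv2 b Y * u 1 * u 2 = 0"
        using u(2) chart3_heval[OF ch, of b y u] v by (simp add: Y_def)
      have "u 1 = 0" "u 2 = 0" using h1 h2 vz by simp_all
      then have "u 0 = 0" using hv Y0 Yv by simp
      moreover have "j = 0 \<or> j = 1 \<or> j = 2" using j v by auto
      ultimately show False using j \<open>u 1 = 0\<close> \<open>u 2 = 0\<close> by auto
    qed
  qed
qed

abbreviation "VB \<equiv> mons {..<3::nat} (4::nat)"

lemma finVB: "finite VB" by (rule finite_mons) simp

lemma chain_mons: "i + j + k = 4 \<Longrightarrow> (\<lambda>_. 0)(2:=k, 1:=j, 0:=i) \<in> VB"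
  by (simp add: mons_def lt3)

lemma polyf_cf: "i + j + k = 4 \<Longrightarrow> polyf VB (\<lambda>b. cf b i j k)"
  unfolding cf_def by (rule polyf_var[OF finVB chain_mons])

lemma polyf_if: "(P \<Longrightarrow> polyf V f) \<Longrightarrow> (\<not> P \<Longrightarrow> polyf V g) \<Longrightarrow> polyf V (\<lambda>b. if P then f b else g b)"
  by (cases P) simp_all

lemmas pf_rules = polyf_add[OF finVB] polyf_mult[OF finVB] polyf_diff[OF finVB] polyf_pow2[OF finVB]
  polyf_const[OF finVB] polyf_if

lemma polyf_Ar: "polyf VB (\<lambda>b. Ar b i j)"
  unfolding Ar_def by (intro polyf_if polyf_cf) simp_all

lemma polyf_cross3:
  assumes "\<And>j. polyf VB (\<lambda>b. p b j)" "\<And>j. polyf VB (\<lambda>b. q b j)"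
  shows "polyf VB (\<lambda>b. cross3 (p b) (q b) j)"
  unfolding cross3_def by (intro pf_rules assms)

lemma polyf_adjm: "polyf VB (\<lambda>b. adjm b i j)"
proof -
  have cr: "polyf VB (\<lambda>b. cross3 (\<lambda>j. Ar b j k) (\<lambda>j. Ar b j l) j)" for k l
    by (intro polyf_cross3 polyf_Ar)
  show ?thesis
  proof (cases "i = 0")
    case True then show ?thesis using cr by (simp add: adjm_def)
  next
    case False then show ?thesis using cr by (cases "i = 1") (simp_all add: adjm_def)
  qed
qed

lemma polyf_det3:
  assumes "\<And>j. polyf VB (\<lambda>b. p b j)" "\<And>j. polyf VB (\<lambda>b. q b j)" "\<And>j. polyf VB (\<lambda>b. r b j)"
  shows "polyf VB (\<lambda>b. det3 (p b) (q b) (r b))"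
  unfolding det3_def by (intro pf_rules assms)

lemma polyf_tw:
  assumes "\<And>i j. polyf VB (\<lambda>b. C b i j)" "\<And>j. polyf VB (\<lambda>b. r b j)"
  shows "polyf VB (\<lambda>b. tw (C b) (r b) j)"
  unfolding tw_def by (intro pf_rules assms)

lemma polyf_r1p: "polyf VB (\<lambda>b. r1p b j)" unfolding r1p_def by (rule polyf_adjm)
lemma polyf_r2p: "polyf VB (\<lambda>b. r2p b j)" unfolding r2p_def by (intro polyf_tw polyf_adjm polyf_r1p)
lemma polyf_r3p: "polyf VB (\<lambda>b. r3p b j)" unfolding r3p_def by (intro polyf_tw polyf_adjm polyf_r2p)

lemma polyf_Qg: "polyf VB (Qg :: ((nat \<Rightarrow> nat) \<Rightarrow> 'a::field) \<Rightarrow> 'a)"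
proof -
  have "polyf VB (\<lambda>b::(nat \<Rightarrow> nat) \<Rightarrow> 'a. dA b * det3 e0 (r1p b) (r2p b) * det3 (r3p b) (r1p b) (r2p b))"
    unfolding dA_def
    by (intro polyf_mult[OF finVB] polyf_det3 polyf_Ar polyf_r1p polyf_r2p polyf_r3p polyf_const[OF finVB])
  then show ?thesis by (simp add: Qg_def[abs_def])
qed

definition b0 :: "(nat \<Rightarrow> nat) \<Rightarrow> 'a::field" where
  "b0 m = (if m 0 = 0 \<and> m 1 = 1 \<and> m 2 = 3 then 1 else if m 0 = 3 \<and> m 1 = 0 \<and> m 2 = 1 then 1
     else if m 0 = 1 \<and> m 1 = 3 \<and> m 2 = 0 then 1 else 0)"

lemma Qg_b0: "Qg (b0 :: (nat \<Rightarrow> nat) \<Rightarrow> 'a::field) \<noteq> 0"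
  by (simp add: Qg_def dA_def r1p_def r2p_def r3p_def tw_def adjm_def cross3_def Ar_def det3_def e0_def cf_def b0_def)

lemma generic_main:
  fixes b :: "(nat \<Rightarrow> nat) \<Rightarrow> 'a::alg_closed_field"
  assumes ch: "CHAR('a) = 2" and Q: "Qg b \<noteq> 0"
  shows "finite (Sing {..<4} 4 (Xcoef b)) \<and> card (Sing {..<4} 4 (Xcoef b)) = 14 \<and>
         (\<forall>P\<in>Sing {..<4} 4 (Xcoef b). is_node {..<4} 4 (Xcoef b) P)"
proof -
  define N1 where "N1 = {x\<in>S1 b. x 0 = 1}"
  have CB: "CB b = proj_class {..<3} ` S1 b" by (rule CB_S1[OF ch])
  have out1: "\<And>x. x \<in> S1 b \<Longrightarrow> \<forall>v. v \<notin> {..<3} \<longrightarrow> x v = 0" by (auto simp: S1_def nzvec_def)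
  have cone1: "\<And>x t. x \<in> S1 b \<Longrightarrow> t \<noteq> 0 \<Longrightarrow> (\<lambda>v. t * x v) \<in> S1 b" by (rule S1_cone)
  have nz1: "\<And>x. x \<in> S1 b \<Longrightarrow> x 0 \<noteq> 0" by (rule generic_S1(2)[OF ch Q])
  have nc1: "proj_class {..<3} ` S1 b = proj_class {..<3} ` N1"
    unfolding N1_def by (rule norm_count(1)[OF out1 cone1 nz1])
  have nc2: "inj_on (proj_class {..<3}) N1"
    unfolding N1_def by (rule norm_count(2)[OF out1 cone1 nz1])
  have c7: "card N1 = 7" unfolding N1_def by (rule generic_S1(3)[OF ch Q])
  have finN1: "finite N1" using c7 by (intro card_ge_0_finite) simp
  have cardCB: "card (CB b) = 7" unfolding CB nc1 using card_image[OF nc2] c7 by simp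
  have finCB: "finite (CB b)" unfolding CB nc1 using finN1 by simp
  have nzCB: "\<forall>P\<in>CB b. \<forall>x\<in>P. x 0 \<noteq> 0"
  proof (intro ballI)
    fix P x assume P: "P \<in> CB b" and x: "x \<in> P"
    obtain x' where x': "x' \<in> S1 b" "P = proj_class {..<3} x'" using P unfolding CB by blast
    obtain c where c: "c \<noteq> 0" "x = (\<lambda>v. c * x' v)" using pc_D[of x "{..<3}" x'] x x' out1 by blast
    show "x 0 \<noteq> 0" using c nz1[OF x'(1)] by simp
  qed
  have p1: "finite (Sing {..<4} 4 (Xcoef b)) \<and> card (Sing {..<4} 4 (Xcoef b)) = 2 * card (CB b)"
    by (rule part1[OF ch finCB nzCB])
  show ?thesis using p1 cardCB node_generic[OF ch Q] by simp
qed

theorem mainTheorem7: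
  fixes b :: "(nat \<Rightarrow> nat) \<Rightarrow> 'a::alg_closed_field"
  assumes "CHAR('a) = 2"
  shows "(finite (CB b) \<and> (\<forall>P\<in>CB b. \<forall>x\<in>P. x 0 \<noteq> 0) \<longrightarrow>
            finite (Sing {..<4} 4 (Xcoef b)) \<and>
            card (Sing {..<4} 4 (Xcoef b)) = 2 * card (CB b))
       \<and> (\<exists>D (pc :: ((nat \<Rightarrow> nat) \<Rightarrow> nat) \<Rightarrow> 'a).
            (\<exists>b0. peval (mons {..<3} 4) D pc b0 \<noteq> 0) \<and>
            (\<forall>b'. peval (mons {..<3} 4) D pc b' \<noteq> 0 \<longrightarrow>
                 finite (Sing {..<4} 4 (Xcoef b')) \<and>
                 card (Sing {..<4} 4 (Xcoef b')) = 14 \<and>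
                 (\<forall>P\<in>Sing {..<4} 4 (Xcoef b'). is_node {..<4} 4 (Xcoef b') P)))"
proof
  show "finite (CB b) \<and> (\<forall>P\<in>CB b. \<forall>x\<in>P. x 0 \<noteq> 0) \<longrightarrow>
            finite (Sing {..<4} 4 (Xcoef b)) \<and>
            card (Sing {..<4} 4 (Xcoef b)) = 2 * card (CB b)"
    using part1[OF assms] by blast
  obtain D and pc :: "((nat \<Rightarrow> nat) \<Rightarrow> nat) \<Rightarrow> 'a" where pc: "\<And>x. Qg x = peval (mons {..<3} 4) D pc x"
    using polyf_Qg[where 'a='a] unfolding polyf_def by blast
  show "\<exists>D (pc :: ((nat \<Rightarrow> nat) \<Rightarrow> nat) \<Rightarrow> 'a).
            (\<exists>b0. peval (mons {..<3} 4) D pc b0 \<noteq> 0) \<and>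
            (\<forall>b'. peval (mons {..<3} 4) D pc b' \<noteq> 0 \<longrightarrow>
                 finite (Sing {..<4} 4 (Xcoef b')) \<and>
                 card (Sing {..<4} 4 (Xcoef b')) = 14 \<and>
                 (\<forall>P\<in>Sing {..<4} 4 (Xcoef b'). is_node {..<4} 4 (Xcoef b') P))"
  proof (intro exI conjI allI impI)
    show "peval (mons {..<3} 4) D pc b0 \<noteq> 0" using Qg_b0 pc by metis
  next
    fix b' :: "(nat \<Rightarrow> nat) \<Rightarrow> 'a" assume "peval (mons {..<3} 4) D pc b' \<noteq> 0"
    then have "Qg b' \<noteq> 0" using pc by metis
    note g = generic_main[OF assms this]
    show "finite (Sing {..<4} 4 (Xcoef b'))" using g by blast
    show "card (Sing {..<4} 4 (Xcoef b')) = 14" using g by blast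
    show "\<forall>P\<in>Sing {..<4} 4 (Xcoef b'). is_node {..<4} 4 (Xcoef b') P" using g by blast
  qed
qed

end
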